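(* Let $k\ge0$, $\hat y\in Y$, and $\bar\lambda_k=\lambda+\frac{2\tau_k\mathsf D^k}{k!}\mathbb 1\{k\ge1\}$. Assume: (i) $\nabla_x f$ exists and $\|\nabla_x f(x',y')-\nabla_x f(x,y)\|\le\lambda\|x'-x\|+\mu\|y'-y\|$ for all $x,x'\in X$, $y,y'\in Y$ (possibly $\mu=\infty$); (ii) $\nabla^k_{y\cdots y}f$ exists and $\|\nabla^k_{y\cdots y}f(x',y')-\nabla^k_{y\cdots y}f(x,y)\|\le\rho_k\|y'-y\|+\sigma_k\|x'-x\|$ for all $x,x',y,y'$, and $\nabla^k_{y\cdots y}f(\cdot,y)$ is absolutely continuous for every $y$; (iii) if $k\ge1$: $\nabla^{k+1}_{xy\cdots y}f$ exists with $\|\nabla^{k+1}_{xy\cdots y}f(x',y)-\nabla^{k+1}_{xy\cdots y}f(x,y)\|\le\tau_k\|x'-x\|$, the set $\{(x,y):x\in X,y\in Y'_x\}$ is Lebesgue measurable where $Y'_x$ is the set of $y$ at which $\nabla^{k+2}_{xxy\cdots y}f(x,y)$ does not exist, and $\nabla^k_{y\cdots y}f(x,\cdot)$ is continuous for every $x$. Then for all $x\in X$, $$\|\nabla\hat\varphi_{2\bar\lambda_k}(x)-\nabla\varphi_{2\bar\lambda_k}(x)\|\le\sqrt{\frac{8\bar\lambda_k\rho_k\mathsf D^{k+1}}{(k+1)!}}.$$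
   Context: Let $E_x,E_y$ be finite-dimensional Euclidean spaces with Euclidean norms; for tensors $\|\cdot\|$ is the induced operator norm. Let $X\subseteq E_x$, $Y\subseteq E_y$ be convex with nonempty interior, $Y$ compact, $\mathsf D\ge\mathrm{diam}(Y)$, $f:X\times Y\to\mathbb R$. $\nabla^j_{y\cdots y}f$ denotes the tensor of $j$-th order partial derivatives in $y$, and $\nabla^{k+1}_{xy\cdots y}f$, $\nabla^{k+2}_{xxy\cdots y}f$ those with additionally one, resp. two, derivatives in $x$. For $\hat y\in Y$, $\hat f_k(x,y)=\sum_{j=0}^k\frac1{j!}\nabla^j_{y\cdots y}f(x,\hat y)[(y-\hat y)^j]$ ($T[v^j]=T[v,\dots,v]$). Primal functions: $\varphi(x)=\max_{y\in Y}f(x,y)$, $\hat\varphi(x)=\max_{y\in Y}\hat f_k(x,y)$. For a function $\phi:X\to\mathbb R$ that is $c$-weakly convex ($\phi+\frac c2\|\cdot\|^2$ convex) with $c<\bar\lambda$, the Moreau envelope is $\phi_{\bar\lambda}(x)=\min_{u\in X}\{\phi(u)+\frac{\bar\lambda}2\|u-x\|^2\}$, which is differentiable. *)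

theory Defs
  imports "HOL-Analysis.Analysis" "HOL-Library.Extended_Real"
begin

text \<open>Tensors of order j on E_y are represented as functions on lists of
  vectors (only lists of length j matter); mixed tensors with one extra
  x-direction take an additional first argument u.\<close>

primrec ydiff :: "('a \<Rightarrow> 'b::euclidean_space \<Rightarrow> real) \<Rightarrow> 'b set \<Rightarrow> nat \<Rightarrow> 'a \<Rightarrow> 'b \<Rightarrow> 'b list \<Rightarrow> real"
  where
    "ydiff f Y 0 x y vs = f x y"
  | "ydiff f Y (Suc j) x y vs =
       frechet_derivative (\<lambda>y'. ydiff f Y j x y' (tl vs)) (at y within Y) (hd vs)"

definition ydiff_exists :: "('a \<Rightarrow> 'b::euclidean_space \<Rightarrow> real) \<Rightarrow> 'a set \<Rightarrow> 'b set \<Rightarrow> nat \<Rightarrow> bool"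
  where "ydiff_exists f X Y k \<longleftrightarrow>
    (\<forall>j<k. \<forall>x\<in>X. \<forall>y\<in>Y. \<forall>vs. length vs = j \<longrightarrow>
        (\<lambda>y'. ydiff f Y j x y' vs) differentiable (at y within Y))"

text \<open>Mixed derivative nabla^{j+1}_{x y..y} f: x-derivative (within X) of the
  j-th y-derivative tensor; applied to x-direction u and y-directions vs.
  For j = 0 this is the partial gradient nabla_x f (as a linear functional).\<close>
definition xydiff :: "('a::euclidean_space \<Rightarrow> 'b::euclidean_space \<Rightarrow> real) \<Rightarrow> 'a set \<Rightarrow> 'b set \<Rightarrow> nat
    \<Rightarrow> 'a \<Rightarrow> 'b \<Rightarrow> 'a \<Rightarrow> 'b list \<Rightarrow> real"
  where "xydiff f X Y j x y u vs =
    frechet_derivative (\<lambda>x'. ydiff f Y j x' y vs) (at x within X) u"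

definition xydiff_exists :: "('a::euclidean_space \<Rightarrow> 'b::euclidean_space \<Rightarrow> real) \<Rightarrow> 'a set \<Rightarrow> 'b set \<Rightarrow> nat \<Rightarrow> bool"
  where "xydiff_exists f X Y j \<longleftrightarrow>
    (\<forall>x\<in>X. \<forall>y\<in>Y. \<forall>vs. length vs = j \<longrightarrow>
        (\<lambda>x'. ydiff f Y j x' y vs) differentiable (at x within X))"

text \<open>Y'_x: points y at which nabla^{k+2}_{xx y..y} f(x,y) does not exist, i.e. the
  tensor-valued map x' \<mapsto> nabla^{k+1}_{x y..y} f(x',y) is not differentiable at x.\<close>
definition Ybad :: "('a::euclidean_space \<Rightarrow> 'b::euclidean_space \<Rightarrow> real) \<Rightarrow> 'a set \<Rightarrow> 'b set \<Rightarrow> nat \<Rightarrow> 'a \<Rightarrow> 'b set"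
  where "Ybad f X Y k x = {y\<in>Y. \<not> (\<forall>u vs. length vs = k \<longrightarrow>
        (\<lambda>x'. xydiff f X Y k x' y u vs) differentiable (at x within X))}"

definition tnorm :: "nat \<Rightarrow> ('b::real_normed_vector list \<Rightarrow> real) \<Rightarrow> real"
  where "tnorm j T = Sup {\<bar>T vs\<bar> | vs. length vs = j \<and> (\<forall>v\<in>set vs. norm v \<le> 1)}"

definition xynorm :: "nat \<Rightarrow> ('a::real_normed_vector \<Rightarrow> 'b::real_normed_vector list \<Rightarrow> real) \<Rightarrow> real"
  where "xynorm j T = Sup {\<bar>T u vs\<bar> | u vs. norm u \<le> 1 \<and> length vs = j \<and> (\<forall>v\<in>set vs. norm v \<le> 1)}"

text \<open>Absolute continuity of a tensor-valued map on X (read along line segments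
  of X, which is convex).\<close>
definition abs_cont_tensor :: "nat \<Rightarrow> 'a::real_normed_vector set \<Rightarrow> ('a \<Rightarrow> 'b::real_normed_vector list \<Rightarrow> real) \<Rightarrow> bool"
  where "abs_cont_tensor j X g \<longleftrightarrow>
    (\<forall>a\<in>X. \<forall>b\<in>X. \<forall>\<epsilon>>0. \<exists>\<delta>>0. \<forall>(n::nat) (s::nat \<Rightarrow> real) t.
       (\<forall>i<n. 0 \<le> s i \<and> s i \<le> t i \<and> t i \<le> 1) \<and>
       (\<forall>i<n. \<forall>i'<n. i \<noteq> i' \<longrightarrow> t i \<le> s i' \<or> t i' \<le> s i) \<and>
       (\<Sum>i<n. t i - s i) < \<delta> \<longrightarrow>
       (\<Sum>i<n. tnorm j (\<lambda>vs. g (a + t i *\<^sub>R (b - a)) vs - g (a + s i *\<^sub>R (b - a)) vs)) < \<epsilon>)"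

definition taylor_model :: "('a \<Rightarrow> 'b::euclidean_space \<Rightarrow> real) \<Rightarrow> 'b set \<Rightarrow> nat \<Rightarrow> 'b \<Rightarrow> 'a \<Rightarrow> 'b \<Rightarrow> real"
  where "taylor_model f Y k yh x y =
    (\<Sum>j\<le>k. ydiff f Y j x yh (replicate j (y - yh)) / fact j)"

definition primal :: "('a \<Rightarrow> 'b \<Rightarrow> real) \<Rightarrow> 'b set \<Rightarrow> 'a \<Rightarrow> real"
  where "primal g Y x = (SUP y\<in>Y. g x y)"

definition moreau :: "('a::real_normed_vector \<Rightarrow> real) \<Rightarrow> 'a set \<Rightarrow> real \<Rightarrow> 'a \<Rightarrow> real"
  where "moreau \<phi> X lam x = (INF u\<in>X. \<phi> u + lam / 2 * (norm (u - x))\<^sup>2)"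

end

theory Submission
  imports Defs
begin

lemma deriv_unique_convex:
  fixes f :: "'a::euclidean_space \<Rightarrow> 'b::real_normed_vector"
  assumes S: "convex S" "interior S \<noteq> {}" and x: "x \<in> S"
    and d1: "(f has_derivative D1) (at x within S)"
    and d2: "(f has_derivative D2) (at x within S)"
  shows "D1 = D2"
proof -
  have l1: "linear D1" "linear D2" using d1 d2 has_derivative_linear by blast+
  have seg: "D1 (z - x) = D2 (z - x)" if z: "z \<in> S" for z
  proof -
    define g where "g = (\<lambda>t::real. x + t *\<^sub>R (z - x))"
    have gd: "(g has_derivative (\<lambda>t. t *\<^sub>R (z - x))) (at 0 within {0..1})"
      unfolding g_def by (auto intro!: derivative_eq_intros)
    have gS: "g ` {0..1} \<subseteq> S"
    proof
      fix w assume "w \<in> g ` {0..1}"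
      then obtain t where t: "t \<in> {0..1}" "w = g t" by auto
      have "w = (1 - t) *\<^sub>R x + t *\<^sub>R z" using t by (simp add: g_def algebra_simps)
      then show "w \<in> S" using S(1) x z t by (auto intro: convexD_alt)
    qed
    have g0: "g 0 = x" by (simp add: g_def)
    have c1: "((f \<circ> g) has_derivative (D1 \<circ> (\<lambda>t. t *\<^sub>R (z - x)))) (at 0 within {0..1})"
      by (rule diff_chain_within[OF gd]) (use has_derivative_subset[OF d1 gS] g0 in simp)
    have c2: "((f \<circ> g) has_derivative (D2 \<circ> (\<lambda>t. t *\<^sub>R (z - x)))) (at 0 within {0..1})"
      by (rule diff_chain_within[OF gd]) (use has_derivative_subset[OF d2 gS] g0 in simp)
    have "D1 \<circ> (\<lambda>t. t *\<^sub>R (z - x)) = D2 \<circ> (\<lambda>t. t *\<^sub>R (z - x))"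
      by (rule frechet_derivative_unique_within_closed_interval[of 0 1 0 "f \<circ> g"])
         (use c1 c2 in \<open>auto simp: cbox_interval\<close>)
    then show ?thesis by (metis comp_apply scaleR_one)
  qed
  obtain z0 where z0: "z0 \<in> interior S" using S(2) by blast
  then obtain r where r: "r > 0" "ball z0 r \<subseteq> S" using mem_interior by blast
  have z0S: "z0 \<in> S" using z0 interior_subset by blast
  show ?thesis
  proof
    fix w
    show "D1 w = D2 w"
    proof (cases "w = 0")
      case True then show ?thesis using l1 by (simp add: linear_0)
    next
      case False
      define c where "c = r / (2 * norm w)"
      have c: "c > 0" using False r by (simp add: c_def)
      define z where "z = z0 + c *\<^sub>R w"
      have "norm (c *\<^sub>R w) < r" using False r by (simp add: c_def)
      then have "z \<in> S" using r by (auto simp: z_def dist_norm intro!: subsetD[OF r(2)])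
      have e: "z - x = (z0 - x) + c *\<^sub>R w" by (simp add: z_def)
      have "D1 (z - x) = D1 (z0 - x) + c *\<^sub>R D1 w" unfolding e by (simp only: linear_add[OF l1(1)] linear_scale[OF l1(1)])
      moreover have "D2 (z - x) = D2 (z0 - x) + c *\<^sub>R D2 w" unfolding e by (simp only: linear_add[OF l1(2)] linear_scale[OF l1(2)])
      ultimately have "c *\<^sub>R D1 w = c *\<^sub>R D2 w" using seg[OF \<open>z \<in> S\<close>] seg[OF z0S] by (metis add_left_cancel)
      then show ?thesis using c by simp
    qed
  qed
qed

definition multilin :: "nat \<Rightarrow> ('b::real_vector list \<Rightarrow> real) \<Rightarrow> bool" where
  "multilin j T \<longleftrightarrow> (\<forall>i<j. \<forall>vs p q a b. length vs = j \<longrightarrow>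
     T (vs[i := a *\<^sub>R p + b *\<^sub>R q]) = a * T (vs[i := p]) + b * T (vs[i := q]))"

lemma MLx_cons:
  assumes "multilin (Suc j) T" shows "multilin j (\<lambda>ws. T (h # ws))"
  unfolding multilin_def
proof (intro allI impI)
  fix i vs p q a b assume i: "i < j" and l: "length (vs::'a list) = j"
  have "T ((h # vs)[Suc i := a *\<^sub>R p + b *\<^sub>R q]) = a * T ((h # vs)[Suc i := p]) + b * T ((h # vs)[Suc i := q])"
    using assms i l unfolding multilin_def by (metis Suc_less_eq length_Cons)
  then show "T (h # vs[i := a *\<^sub>R p + b *\<^sub>R q]) = a * T (h # vs[i := p]) + b * T (h # vs[i := q])" by simp
qed

lemma MLx_lin0:
  assumes "multilin (Suc j) T" "length ws = j"
  shows "T ((a *\<^sub>R p + b *\<^sub>R q) # ws) = a * T (p # ws) + b * T (q # ws)"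
proof -
  have "T ((p # ws)[0 := a *\<^sub>R p + b *\<^sub>R q]) = a * T ((p # ws)[0 := p]) + b * T ((p # ws)[0 := q])"
    using assms unfolding multilin_def by (metis length_Cons zero_less_Suc)
  then show ?thesis by simp
qed

lemma MLx_linear0:
  assumes "multilin (Suc j) T" "length ws = j"
  shows "linear (\<lambda>h. T (h # ws))"
proof (rule linearI)
  fix p q :: 'a
  show "T ((p + q) # ws) = T (p # ws) + T (q # ws)"
    using MLx_lin0[OF assms, of 1 p 1 q] by simp
next
  fix c :: real and p :: 'a
  show "T ((c *\<^sub>R p) # ws) = c *\<^sub>R T (p # ws)"
    using MLx_lin0[OF assms, of c p 0 p] by simp
qed

lemma MLx_homog:
  assumes "multilin j T" "length vs = j"
  shows "T (map ((*\<^sub>R) c) vs) = c ^ j * T vs"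
  using assms
proof (induction j arbitrary: T vs)
  case 0 then show ?case by simp
next
  case (Suc j)
  then obtain h ws where vs: "vs = h # ws" and l: "length ws = j" by (cases vs) auto
  have "T (map ((*\<^sub>R) c) vs) = T ((c *\<^sub>R h + 0 *\<^sub>R h) # map ((*\<^sub>R) c) ws)" by (simp add: vs)
  also have "\<dots> = c * T (h # map ((*\<^sub>R) c) ws)"
    using MLx_lin0[OF Suc.prems(1), of "map ((*\<^sub>R) c) ws" c h 0 h] l by simp
  also have "T (h # map ((*\<^sub>R) c) ws) = c ^ j * T (h # ws)"
    using Suc.IH[OF MLx_cons[OF Suc.prems(1)] l] by simp
  finally show ?case by (simp add: vs)
qed

lemma MLx_bound:
  fixes T :: "'a::euclidean_space list \<Rightarrow> real"
  assumes "multilin j T"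
  shows "\<exists>C. \<forall>vs. length vs = j \<and> (\<forall>v\<in>set vs. norm v \<le> 1) \<longrightarrow> \<bar>T vs\<bar> \<le> C"
  using assms
proof (induction j arbitrary: T)
  case 0 then show ?case by (intro exI[of _ "\<bar>T []\<bar>"]) auto
next
  case (Suc j)
  have "\<forall>b\<in>Basis. \<exists>C. \<forall>vs. length vs = j \<and> (\<forall>v\<in>set vs. norm v \<le> 1) \<longrightarrow> \<bar>T (b # vs)\<bar> \<le> C"
    using Suc.IH[OF MLx_cons[OF Suc.prems]] by blast
  then obtain C where C: "\<And>b vs. b \<in> Basis \<Longrightarrow> length vs = j \<Longrightarrow> (\<forall>v\<in>set vs. norm v \<le> 1) \<Longrightarrow> \<bar>T (b # vs)\<bar> \<le> C b"
    by metis
  show ?case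
  proof (intro exI[of _ "\<Sum>b\<in>Basis. C b"] allI impI)
    fix vs :: "'a list" assume vs: "length vs = Suc j \<and> (\<forall>v\<in>set vs. norm v \<le> 1)"
    then obtain h ws where hw: "vs = h # ws" and l: "length ws = j" by (cases vs) auto
    have hn: "norm h \<le> 1" and wn: "\<forall>v\<in>set ws. norm v \<le> 1" using vs hw by auto
    have lin: "linear (\<lambda>h. T (h # ws))" by (rule MLx_linear0[OF Suc.prems l])
    have "T (h # ws) = T ((\<Sum>b\<in>Basis. (h \<bullet> b) *\<^sub>R b) # ws)" by (simp add: euclidean_representation)
    also have "\<dots> = (\<Sum>b\<in>Basis. (h \<bullet> b) * T (b # ws))"
      using linear_sum[OF lin, of "\<lambda>b. (h \<bullet> b) *\<^sub>R b" Basis] linear_scale[OF lin] by simp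
    finally have eq: "T (h # ws) = (\<Sum>b\<in>Basis. (h \<bullet> b) * T (b # ws))" .
    have "\<bar>T (h # ws)\<bar> \<le> (\<Sum>b\<in>Basis. \<bar>(h \<bullet> b) * T (b # ws)\<bar>)" unfolding eq by (rule sum_abs)
    also have "\<dots> \<le> (\<Sum>b\<in>Basis. C b)"
    proof (rule sum_mono)
      fix b :: 'a assume b: "b \<in> Basis"
      have "\<bar>h \<bullet> b\<bar> \<le> 1" using Basis_le_norm[OF b, of h] hn by simp
      then have "\<bar>(h \<bullet> b) * T (b # ws)\<bar> \<le> \<bar>T (b # ws)\<bar>"
        by (simp add: abs_mult mult_left_le_one_le)
      also have "\<dots> \<le> C b" using C[OF b l wn] .
      finally show "\<bar>(h \<bullet> b) * T (b # ws)\<bar> \<le> C b" .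
    qed
    finally show "\<bar>T vs\<bar> \<le> (\<Sum>b\<in>Basis. C b)" by (simp add: hw)
  qed
qed

lemma MLx_bdd:
  fixes T :: "'a::euclidean_space list \<Rightarrow> real"
  assumes "multilin j T"
  shows "bdd_above {\<bar>T vs\<bar> | vs. length vs = j \<and> (\<forall>v\<in>set vs. norm v \<le> 1)}"
  using MLx_bound[OF assms] unfolding bdd_above_def by blast

lemma MLx_tnorm:
  fixes T :: "'a::euclidean_space list \<Rightarrow> real"
  assumes "multilin j T"
  shows "\<bar>T (replicate j v)\<bar> \<le> tnorm j T * norm v ^ j" and "0 \<le> tnorm j T"
proof -
  have le: "\<bar>T (replicate j w)\<bar> \<le> tnorm j T" if "norm w \<le> 1" for w
    unfolding tnorm_def by (rule cSup_upper[OF _ MLx_bdd[OF assms]]) (use that in auto)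
  show "0 \<le> tnorm j T" using le[of 0] by simp
  show "\<bar>T (replicate j v)\<bar> \<le> tnorm j T * norm v ^ j"
  proof (cases "v = 0")
    case True
    have "T (replicate j v) = T (map ((*\<^sub>R) 0) (replicate j v))" using True by simp
    also have "\<dots> = 0 ^ j * T (replicate j v)" by (rule MLx_homog[OF assms]) simp
    finally show ?thesis using True le[of 0] by (cases j) auto
  next
    case False
    define w where "w = v /\<^sub>R norm v"
    have w: "norm w \<le> 1" using False by (simp add: w_def)
    have e: "replicate j v = map ((*\<^sub>R) (norm v)) (replicate j w)" using False by (simp add: w_def)
    have "T (replicate j v) = T (map ((*\<^sub>R) (norm v)) (replicate j w))" by (simp only: e)
    also have "\<dots> = norm v ^ j * T (replicate j w)" by (rule MLx_homog[OF assms]) simp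
    finally have "T (replicate j v) = norm v ^ j * T (replicate j w)" .
    then have "\<bar>T (replicate j v)\<bar> = norm v ^ j * \<bar>T (replicate j w)\<bar>" by (simp add: abs_mult)
    also have "\<dots> \<le> norm v ^ j * tnorm j T" by (rule mult_left_mono[OF le[OF w]]) simp
    finally show ?thesis by (simp add: mult.commute)
  qed
qed

lemma MLy_bdd:
  fixes T :: "'a::euclidean_space \<Rightarrow> 'b::euclidean_space list \<Rightarrow> real"
  assumes lin: "\<And>vs. length vs = j \<Longrightarrow> linear (\<lambda>u. T u vs)" and ml: "\<And>u. multilin j (T u)"
  shows "bdd_above {\<bar>T u vs\<bar> | u vs. norm u \<le> 1 \<and> length vs = j \<and> (\<forall>v\<in>set vs. norm v \<le> 1)}"
proof -
  have "\<forall>b\<in>Basis. \<exists>C. \<forall>vs. length vs = j \<and> (\<forall>v\<in>set vs. norm v \<le> 1) \<longrightarrow> \<bar>T b vs\<bar> \<le> C"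
    using MLx_bound[OF ml] by blast
  then obtain C where C: "\<And>b vs. b \<in> Basis \<Longrightarrow> length vs = j \<Longrightarrow> (\<forall>v\<in>set vs. norm v \<le> 1) \<Longrightarrow> \<bar>T b vs\<bar> \<le> C b"
    by metis
  have "\<bar>T u vs\<bar> \<le> (\<Sum>b\<in>Basis. C b)" if u: "norm u \<le> 1" and l: "length vs = j" and wn: "\<forall>v\<in>set vs. norm v \<le> 1" for u vs
  proof -
    have lin: "linear (\<lambda>u. T u vs)" by (rule lin[OF l])
    have "T u vs = T (\<Sum>b\<in>Basis. (u \<bullet> b) *\<^sub>R b) vs" by (simp add: euclidean_representation)
    also have "\<dots> = (\<Sum>b\<in>Basis. (u \<bullet> b) * T b vs)"
      using linear_sum[OF lin, of "\<lambda>b. (u \<bullet> b) *\<^sub>R b" Basis] linear_scale[OF lin] by simp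
    finally have eq: "T u vs = (\<Sum>b\<in>Basis. (u \<bullet> b) * T b vs)" .
    have "\<bar>T u vs\<bar> \<le> (\<Sum>b\<in>Basis. \<bar>(u \<bullet> b) * T b vs\<bar>)" unfolding eq by (rule sum_abs)
    also have "\<dots> \<le> (\<Sum>b\<in>Basis. C b)"
    proof (rule sum_mono)
      fix b :: 'a assume b: "b \<in> Basis"
      have "\<bar>u \<bullet> b\<bar> \<le> 1" using Basis_le_norm[OF b, of u] u by simp
      then have "\<bar>(u \<bullet> b) * T b vs\<bar> \<le> \<bar>T b vs\<bar>"
        by (simp add: abs_mult mult_left_le_one_le)
      also have "\<dots> \<le> C b" using C[OF b l wn] .
      finally show "\<bar>(u \<bullet> b) * T b vs\<bar> \<le> C b" .
    qed
    finally show ?thesis .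
  qed
  then show ?thesis unfolding bdd_above_def by blast
qed

lemma MLx_xynorm:
  fixes T :: "'a::euclidean_space \<Rightarrow> 'b::euclidean_space list \<Rightarrow> real"
  assumes lin: "\<And>vs. length vs = j \<Longrightarrow> linear (\<lambda>u. T u vs)" and ml: "\<And>u. multilin j (T u)"
  shows "\<bar>T u (replicate j v)\<bar> \<le> xynorm j T * norm u * norm v ^ j" and "0 \<le> xynorm j T"
proof -
  have le: "\<bar>T u' (replicate j w)\<bar> \<le> xynorm j T" if "norm u' \<le> 1" "norm w \<le> 1" for u' w
    unfolding xynorm_def
    by (rule cSup_upper[OF _ MLy_bdd[OF lin ml]]) (auto intro!: exI[of _ u'] exI[of _ "replicate j w"] simp: that)
  show "0 \<le> xynorm j T" using le[of 0 0] by simp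
  have lin': "T (a *\<^sub>R p) (replicate j w) = a * T p (replicate j w)" for a p w
    using linear_scale[OF lin[of "replicate j w"]] by simp
  have hom: "T p (map ((*\<^sub>R) c) (replicate j w)) = c ^ j * T p (replicate j w)" for p c w
    using MLx_homog[OF ml[of p], of "replicate j w" c] by simp
  obtain u' where u': "norm u' \<le> 1" "u = norm u *\<^sub>R u'"
  proof (cases "u = 0")
    case True then show ?thesis using that[of 0] by simp
  next
    case False then show ?thesis using that[of "u /\<^sub>R norm u"] by simp
  qed
  obtain w c where w: "norm w \<le> 1" "replicate j v = map ((*\<^sub>R) c) (replicate j w)" "\<bar>c ^ j\<bar> \<le> norm v ^ j"
  proof (cases "v = 0")
    case True then show ?thesis using that[of 0 0] by (cases j) auto
  next
    case False then show ?thesis using that[of "v /\<^sub>R norm v" "norm v"] by simp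
  qed
  have "T u (replicate j v) = norm u * (c ^ j * T u' (replicate j w))"
    using lin'[of "norm u" u'] hom[of u' c w] u' w by metis
  then have "\<bar>T u (replicate j v)\<bar> = norm u * (\<bar>c ^ j\<bar> * \<bar>T u' (replicate j w)\<bar>)" by (simp add: abs_mult)
  also have "\<dots> \<le> norm u * (norm v ^ j * xynorm j T)"
    by (intro mult_left_mono mult_mono w(3) le u'(1) w(1)) auto
  finally show "\<bar>T u (replicate j v)\<bar> \<le> xynorm j T * norm u * norm v ^ j" by (simp add: ac_simps)
qed

lemma fd_lincomb:
  fixes g1 g2 g :: "'a::euclidean_space \<Rightarrow> real"
  assumes S: "convex S" "interior S \<noteq> {}" and y: "y \<in> S"
    and d1: "g1 differentiable (at y within S)" and d2: "g2 differentiable (at y within S)"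
    and d: "g differentiable (at y within S)"
    and eq: "\<And>y'. y' \<in> S \<Longrightarrow> g y' = a * g1 y' + b * g2 y'"
  shows "frechet_derivative g (at y within S) h =
     a * frechet_derivative g1 (at y within S) h + b * frechet_derivative g2 (at y within S) h"
proof -
  have h1: "(g1 has_derivative frechet_derivative g1 (at y within S)) (at y within S)"
    using frechet_derivative_works[THEN iffD1, OF d1] .
  have h2: "(g2 has_derivative frechet_derivative g2 (at y within S)) (at y within S)"
    using frechet_derivative_works[THEN iffD1, OF d2] .
  have "((\<lambda>y'. a * g1 y' + b * g2 y') has_derivative
      (\<lambda>h. a * frechet_derivative g1 (at y within S) h + b * frechet_derivative g2 (at y within S) h)) (at y within S)"
    by (intro has_derivative_add has_derivative_mult_right h1 h2)
  then have hc: "(g has_derivative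
      (\<lambda>h. a * frechet_derivative g1 (at y within S) h + b * frechet_derivative g2 (at y within S) h)) (at y within S)"
    by (rule has_derivative_transform_within[of _ _ _ _ 1]) (use y eq in auto)
  have "(g has_derivative frechet_derivative g (at y within S)) (at y within S)"
    using frechet_derivative_works[THEN iffD1, OF d] .
  from deriv_unique_convex[OF S y this hc] show ?thesis by simp
qed

lemma ydiff_multilin:
  fixes f :: "'a \<Rightarrow> 'b::euclidean_space \<Rightarrow> real"
  assumes Y: "convex Y" "interior Y \<noteq> {}" and ex: "ydiff_exists f X Y k" and x: "x \<in> X"
  shows "j \<le> k \<Longrightarrow> \<forall>y\<in>Y. multilin j (ydiff f Y j x y)"
proof (induction j)
  case 0 then show ?case by (simp add: multilin_def)
next
  case (Suc j)
  have jk: "j < k" using Suc.prems by simp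
  have IH: "\<And>y. y \<in> Y \<Longrightarrow> multilin j (ydiff f Y j x y)" using Suc.IH jk by simp
  have dif: "\<And>y ws. y \<in> Y \<Longrightarrow> length ws = j \<Longrightarrow> (\<lambda>y'. ydiff f Y j x y' ws) differentiable (at y within Y)"
    using ex jk x unfolding ydiff_exists_def by blast
  show ?case
  proof (intro ballI, unfold multilin_def, intro allI impI)
    fix y i p q a b and vs :: "'b list"
    assume y: "y \<in> Y" and i: "i < Suc j" and l: "length vs = Suc j"
    then obtain h ws where vs: "vs = h # ws" and lw: "length ws = j" by (cases vs) auto
    show "ydiff f Y (Suc j) x y (vs[i := a *\<^sub>R p + b *\<^sub>R q]) =
          a * ydiff f Y (Suc j) x y (vs[i := p]) + b * ydiff f Y (Suc j) x y (vs[i := q])"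
    proof (cases i)
      case 0
      have "linear (frechet_derivative (\<lambda>y'. ydiff f Y j x y' ws) (at y within Y))"
        using dif[OF y lw] by (rule linear_frechet_derivative)
      then show ?thesis using 0 vs by (simp add: linear_add linear_scale)
    next
      case (Suc i')
      have i': "i' < j" using i Suc by simp
      have eq: "ydiff f Y j x y' (ws[i' := a *\<^sub>R p + b *\<^sub>R q]) =
          a * ydiff f Y j x y' (ws[i' := p]) + b * ydiff f Y j x y' (ws[i' := q])" if "y' \<in> Y" for y'
        using IH[OF that] i' lw unfolding multilin_def by blast
      have "frechet_derivative (\<lambda>y'. ydiff f Y j x y' (ws[i' := a *\<^sub>R p + b *\<^sub>R q])) (at y within Y) h =
        a * frechet_derivative (\<lambda>y'. ydiff f Y j x y' (ws[i' := p])) (at y within Y) h +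
        b * frechet_derivative (\<lambda>y'. ydiff f Y j x y' (ws[i' := q])) (at y within Y) h"
        by (rule fd_lincomb[OF Y y]) (use dif[OF y] lw eq in auto)
      then show ?thesis using Suc vs by simp
    qed
  qed
qed

lemma xydiff_multilin:
  fixes f :: "'a::euclidean_space \<Rightarrow> 'b::euclidean_space \<Rightarrow> real"
  assumes X: "convex X" "interior X \<noteq> {}" and Y: "convex Y" "interior Y \<noteq> {}"
    and ex: "ydiff_exists f X Y k" and exx: "xydiff_exists f X Y k" and x: "x \<in> X" and y: "y \<in> Y"
  shows "\<And>vs. length vs = k \<Longrightarrow> linear (\<lambda>u. xydiff f X Y k x y u vs)"
    and "\<And>u. multilin k (xydiff f X Y k x y u)"
proof -
  have dif: "\<And>x ws. x \<in> X \<Longrightarrow> length ws = k \<Longrightarrow> (\<lambda>x'. ydiff f Y k x' y ws) differentiable (at x within X)"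
    using exx y unfolding xydiff_exists_def by blast
  show "linear (\<lambda>u. xydiff f X Y k x y u vs)" if "length vs = k" for vs
    unfolding xydiff_def using dif[OF x that] by (rule linear_frechet_derivative)
  fix u
  show "multilin k (xydiff f X Y k x y u)"
  proof (unfold multilin_def, intro allI impI)
    fix i p q a b and ws :: "'b list"
    assume i: "i < k" and lw: "length ws = k"
    have eq: "ydiff f Y k x' y (ws[i := a *\<^sub>R p + b *\<^sub>R q]) =
        a * ydiff f Y k x' y (ws[i := p]) + b * ydiff f Y k x' y (ws[i := q])" if "x' \<in> X" for x'
      using ydiff_multilin[OF Y ex that, of k] y i lw unfolding multilin_def by blast
    have "frechet_derivative (\<lambda>x'. ydiff f Y k x' y (ws[i := a *\<^sub>R p + b *\<^sub>R q])) (at x within X) u =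
      a * frechet_derivative (\<lambda>x'. ydiff f Y k x' y (ws[i := p])) (at x within X) u +
      b * frechet_derivative (\<lambda>x'. ydiff f Y k x' y (ws[i := q])) (at x within X) u"
      by (rule fd_lincomb[OF X x]) (use dif[OF x] lw eq in auto)
    then show "xydiff f X Y k x y u (ws[i := a *\<^sub>R p + b *\<^sub>R q]) =
       a * xydiff f X Y k x y u (ws[i := p]) + b * xydiff f X Y k x y u (ws[i := q])"
      by (simp add: xydiff_def)
  qed
qed

lemma mvt01:
  fixes h h' :: "real \<Rightarrow> real"
  assumes ab: "0 \<le> a" "a < b" "b \<le> 1"
    and d: "\<And>t. t \<in> {0..1} \<Longrightarrow> (h has_real_derivative h' t) (at t within {0..1})"
  shows "\<exists>\<xi>\<in>{a<..<b}. h b - h a = h' \<xi> * (b - a)"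
proof -
  have "\<exists>\<xi>\<in>{a<..<b}. h b - h a = (\<lambda>x. (*) (h' x)) \<xi> (b - a)"
  proof (rule mvt_simple[OF ab(2)])
    fix x assume "a \<le> x" "x \<le> b"
    then have "x \<in> {0..1}" "{a..b} \<subseteq> {0..1}" using ab by auto
    then show "(h has_derivative (*) (h' x)) (at x within {a..b})"
      using has_derivative_subset has_field_derivative_imp_has_derivative d by blast
  qed
  then show ?thesis by simp
qed

lemma smooth1d:
  fixes g g' :: "real \<Rightarrow> real"
  assumes d: "\<And>t. t \<in> {0..1} \<Longrightarrow> (g has_real_derivative g' t) (at t within {0..1})"
    and lip: "\<And>s t. s \<in> {0..1} \<Longrightarrow> t \<in> {0..1} \<Longrightarrow> \<bar>g' s - g' t\<bar> \<le> L * \<bar>s - t\<bar>"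
  shows "\<And>t. t \<in> {0..1} \<Longrightarrow> g t \<le> (1 - t) * g 0 + t * g 1 + L / 2 * t * (1 - t)"
    and "g 0 + g' 0 - L / 2 \<le> g 1"
proof -
  define h where "h = (\<lambda>t. g t + L / 2 * t\<^sup>2)"
  define h' where "h' = (\<lambda>t. g' t + L * t)"
  have hd: "(h has_real_derivative h' t) (at t within {0..1})" if "t \<in> {0..1}" for t
    unfolding h_def h'_def by (rule derivative_eq_intros d[OF that] refl)+ (simp add: power2_eq_square)
  have mono: "h' s \<le> h' t" if "s \<in> {0..1}" "t \<in> {0..1}" "s \<le> t" for s t
  proof -
    have "\<bar>g' t - g' s\<bar> \<le> L * \<bar>t - s\<bar>" using lip that by blast
    moreover have "\<bar>t - s\<bar> = t - s" using that by simp
    ultimately show ?thesis using abs_ge_minus_self[of "g' t - g' s"] unfolding h'_def by (simp add: algebra_simps)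
  qed
  show "g t \<le> (1 - t) * g 0 + t * g 1 + L / 2 * t * (1 - t)" if t: "t \<in> {0..1}" for t
  proof (cases "t = 0 \<or> t = 1")
    case True then show ?thesis by auto
  next
    case False
    then have t01: "0 < t" "t < 1" using t by auto
    obtain \<xi> where \<xi>: "\<xi> \<in> {0<..<t}" "h t - h 0 = h' \<xi> * (t - 0)" using mvt01[of 0 t h h'] hd t01 by auto
    obtain \<eta> where \<eta>: "\<eta> \<in> {t<..<1}" "h 1 - h t = h' \<eta> * (1 - t)" using mvt01[of t 1 h h'] hd t01 by auto
    have m: "h' \<xi> \<le> h' \<eta>" using mono[of \<xi> \<eta>] \<xi> \<eta> t01 by auto
    have "h t - (1 - t) * h 0 - t * h 1 = (1 - t) * (h t - h 0) - t * (h 1 - h t)" by (simp add: algebra_simps)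
    also have "\<dots> = (1 - t) * (h' \<xi> * t) - t * (h' \<eta> * (1 - t))" using \<xi>(2) \<eta>(2) by simp
    also have "\<dots> = t * (1 - t) * (h' \<xi> - h' \<eta>)" by (simp add: algebra_simps)
    also have "\<dots> \<le> 0" using m t01 by (simp add: mult_nonneg_nonpos)
    finally have hi: "h t \<le> (1 - t) * h 0 + t * h 1" by simp
    have e1: "L / 2 * t * (1 - t) = L / 2 * t - L / 2 * t\<^sup>2" by (simp add: power2_eq_square field_simps)
    have hv: "h 0 = g 0" "h 1 = g 1 + L / 2" "h t = g t + L / 2 * t\<^sup>2" by (simp_all add: h_def)
    have e2: "t * (g 1 + L / 2) = t * g 1 + L / 2 * t" by (simp add: distrib_left)
    have "g t + L / 2 * t\<^sup>2 \<le> (1 - t) * g 0 + t * (g 1 + L / 2)" using hi unfolding hv .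
    then show ?thesis unfolding e2 e1 by linarith
  qed
  obtain \<xi> where \<xi>: "\<xi> \<in> {0<..<1}" "h 1 - h 0 = h' \<xi> * (1 - 0)" using mvt01[of 0 1 h h'] hd by auto
  have "h' 0 \<le> h' \<xi>" using mono[of 0 \<xi>] \<xi> by auto
  then show "g 0 + g' 0 - L / 2 \<le> g 1" using \<xi> unfolding h_def h'_def by simp
qed

lemma integ_bound:
  fixes r r' G G' :: "real \<Rightarrow> real"
  assumes dr: "\<And>t. t \<in> {0..1} \<Longrightarrow> (r has_real_derivative r' t) (at t within {0..1})"
    and dG: "\<And>t. t \<in> {0..1} \<Longrightarrow> (G has_real_derivative G' t) (at t within {0..1})"
    and b: "\<And>t. t \<in> {0..1} \<Longrightarrow> \<bar>r' t\<bar> \<le> G' t"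
    and r0: "r 0 = 0" and G0: "G 0 = 0"
    and t: "t \<in> {0..1}"
  shows "\<bar>r t\<bar> \<le> G t"
proof (cases "t = 0")
  case True then show ?thesis using r0 G0 by simp
next
  case False
  then have t0: "0 < t" "t \<le> 1" using t by auto
  have d1: "((\<lambda>t. G t - r t) has_real_derivative G' t - r' t) (at t within {0..1})" if "t \<in> {0..1}" for t
    by (intro derivative_intros dG dr that)
  have d2: "((\<lambda>t. G t + r t) has_real_derivative G' t + r' t) (at t within {0..1})" if "t \<in> {0..1}" for t
    by (intro derivative_intros dG dr that)
  obtain \<xi> where \<xi>: "\<xi> \<in> {0<..<t}" "(G t - r t) - (G 0 - r 0) = (G' \<xi> - r' \<xi>) * (t - 0)"
    using mvt01[of 0 t "\<lambda>t. G t - r t", OF _ _ _ d1] t0 by auto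
  obtain \<eta> where \<eta>: "\<eta> \<in> {0<..<t}" "(G t + r t) - (G 0 + r 0) = (G' \<eta> + r' \<eta>) * (t - 0)"
    using mvt01[of 0 t "\<lambda>t. G t + r t", OF _ _ _ d2] t0 by auto
  have "\<bar>r' \<xi>\<bar> \<le> G' \<xi>" "\<bar>r' \<eta>\<bar> \<le> G' \<eta>" using b \<xi>(1) \<eta>(1) t0 by auto
  then have "0 \<le> (G' \<xi> - r' \<xi>) * t" "0 \<le> (G' \<eta> + r' \<eta>) * t" using t0 by auto
  then show ?thesis using \<xi>(2) \<eta>(2) r0 G0 by auto
qed

lemma taylor_bound:
  fixes Q :: "nat \<Rightarrow> real \<Rightarrow> real"
  assumes "\<And>j t. j < k \<Longrightarrow> t \<in> {0..1} \<Longrightarrow> (Q j has_real_derivative Q (Suc j) t) (at t within {0..1})"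
    and "\<And>t. t \<in> {0..1} \<Longrightarrow> \<bar>Q k t - Q k 0\<bar> \<le> A * t + B"
  shows "\<forall>t\<in>{0..1}. \<bar>Q 0 t - (\<Sum>j\<le>k. Q j 0 * t ^ j / fact j)\<bar> \<le> A * t ^ (Suc k) / fact (Suc k) + B * t ^ k / fact k"
  using assms
proof (induction k arbitrary: Q)
  case 0 then show ?case by simp
next
  case (Suc k)
  let ?Q = "\<lambda>j. Q (Suc j)"
  have IH: "\<bar>Q 1 t - (\<Sum>j\<le>k. Q (Suc j) 0 * t ^ j / fact j)\<bar> \<le> A * t ^ (Suc k) / fact (Suc k) + B * t ^ k / fact k"
    if "t \<in> {0..1}" for t
    using Suc.IH[of ?Q] Suc.prems that by simp
  define r where "r = (\<lambda>t. Q 0 t - (\<Sum>j\<le>Suc k. Q j 0 * t ^ j / fact j))"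
  define r' where "r' = (\<lambda>t. Q 1 t - (\<Sum>j\<le>k. Q (Suc j) 0 * t ^ j / fact j))"
  define G where "G = (\<lambda>t::real. A * t ^ (Suc (Suc k)) / fact (Suc (Suc k)) + B * t ^ (Suc k) / fact (Suc k))"
  define G' where "G' = (\<lambda>t::real. A * t ^ (Suc k) / fact (Suc k) + B * t ^ k / fact k)"
  have sumeq: "(\<Sum>j\<le>Suc k. Q j 0 * t ^ j / fact j) = Q 0 0 + (\<Sum>j\<le>k. Q (Suc j) 0 * (t ^ Suc j / fact (Suc j)))" for t :: real
    unfolding sum.atMost_Suc_shift by (simp del: fact_Suc power_Suc sum.atMost_Suc)
  have pd: "((\<lambda>t::real. t ^ Suc j / fact (Suc j)) has_real_derivative t ^ j / fact j) (at t)" for j t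
  proof -
    have "((\<lambda>t::real. t ^ Suc j / fact (Suc j)) has_real_derivative (real (Suc j) * t ^ j) / fact (Suc j)) (at t)"
      by (intro derivative_eq_intros) auto
    moreover have "(real (Suc j) * t ^ j) / fact (Suc j) = t ^ j / fact j"
      by (simp add: fact_Suc field_simps del: of_nat_Suc)
    ultimately show ?thesis by simp
  qed
  have dr: "(r has_real_derivative r' t) (at t within {0..1})" if "t \<in> {0..1}" for t
  proof -
    have "((\<lambda>t. Q 0 t - (Q 0 0 + (\<Sum>j\<le>k. Q (Suc j) 0 * (t ^ Suc j / fact (Suc j))))) has_real_derivative
       Q 1 t - (0 + (\<Sum>j\<le>k. Q (Suc j) 0 * (t ^ j / fact j)))) (at t within {0..1})"
    proof -
      have d0: "(Q 0 has_real_derivative Q 1 t) (at t within {0..1})" using Suc.prems(1)[of 0 t] that by simp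
      have ds: "((\<lambda>z. Q (Suc n) 0 * (z ^ Suc n / fact (Suc n))) has_real_derivative Q (Suc n) 0 * (t ^ n / fact n)) (at t within {0..1})" for n
        by (rule DERIV_cmult, rule has_field_derivative_at_within, rule pd)
      have sm: "((\<lambda>t. \<Sum>j\<le>k. Q (Suc j) 0 * (t ^ Suc j / fact (Suc j))) has_real_derivative (\<Sum>j\<le>k. Q (Suc j) 0 * (t ^ j / fact j))) (at t within {0..1})"
        by (rule DERIV_sum) (rule ds)
      show ?thesis by (rule DERIV_diff[OF d0 DERIV_add[OF DERIV_const sm]])
    qed
    then show ?thesis unfolding r_def r'_def sumeq by simp
  qed
  have dG: "(G has_real_derivative G' t) (at t within {0..1})" for t
  proof -
    have G_eq: "G = (\<lambda>t. A * (t ^ Suc (Suc k) / fact (Suc (Suc k))) + B * (t ^ Suc k / fact (Suc k)))"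
      by (simp add: G_def fun_eq_iff del: fact_Suc power_Suc)
    have "(G has_real_derivative A * (t ^ Suc k / fact (Suc k)) + B * (t ^ k / fact k)) (at t)"
      unfolding G_eq by (rule DERIV_add[OF DERIV_cmult[OF pd] DERIV_cmult[OF pd]])
    then have "(G has_real_derivative A * (t ^ Suc k / fact (Suc k)) + B * (t ^ k / fact k)) (at t within {0..1})"
      by (rule has_field_derivative_at_within)
    then show ?thesis unfolding G'_def by simp
  qed
  show ?case
  proof
    fix t :: real assume t: "t \<in> {0..1}"
    have "\<bar>r t\<bar> \<le> G t"
      by (rule integ_bound[OF dr dG _ _ _ t]) (use IH in \<open>auto simp: r_def r'_def G_def G'_def\<close>)
    then show "\<bar>Q 0 t - (\<Sum>j\<le>Suc k. Q j 0 * t ^ j / fact j)\<bar> \<le> A * t ^ (Suc (Suc k)) / fact (Suc (Suc k)) + B * t ^ (Suc k) / fact (Suc k)"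
      unfolding r_def G_def by simp
  qed
qed

lemma sq_comb:
  fixes a b :: "'a::real_inner"
  shows "(norm ((1 - t) *\<^sub>R a + t *\<^sub>R b))\<^sup>2 = (1 - t) * (norm a)\<^sup>2 + t * (norm b)\<^sup>2 - t * (1 - t) * (norm (a - b))\<^sup>2"
  by (simp only: power2_norm_eq_inner) (simp add: inner_simps inner_commute algebra_simps power2_eq_square)

lemma sq_shift:
  fixes a h :: "'a::real_inner"
  shows "(norm (a - h))\<^sup>2 = (norm a)\<^sup>2 - 2 * (a \<bullet> h) + (norm h)\<^sup>2"
  by (simp add: power2_norm_eq_inner inner_simps inner_commute algebra_simps)

lemma deriv_from_quad:
  fixes E :: "'a::euclidean_space \<Rightarrow> real"
  assumes C: "C > 0" and q: "\<And>h. \<bar>E (x + h) - E x - h \<bullet> g\<bar> \<le> C * (norm h)\<^sup>2"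
  shows "GDERIV E x :> g"
  unfolding gderiv_def has_derivative_at_alt
proof (intro conjI allI impI)
  show "bounded_linear (\<lambda>h. h \<bullet> g)" by (rule bounded_linear_inner_left)
  fix e :: real assume e: "e > 0"
  show "\<exists>d>0. \<forall>y. norm (y - x) < d \<longrightarrow> norm (E y - E x - (y - x) \<bullet> g) \<le> e * norm (y - x)"
  proof (intro exI[of _ "e / C"] conjI allI impI)
    show "e / C > 0" using e C by simp
    fix y assume y: "norm (y - x) < e / C"
    have "norm (E y - E x - (y - x) \<bullet> g) \<le> C * (norm (y - x))\<^sup>2" using q[of "y - x"] by simp
    also have "\<dots> = (C * norm (y - x)) * norm (y - x)" by (simp add: power2_eq_square)
    also have "\<dots> \<le> e * norm (y - x)"
      by (rule mult_right_mono) (use y C in \<open>auto simp: field_simps\<close>)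
    finally show "norm (E y - E x - (y - x) \<bullet> g) \<le> e * norm (y - x)" .
  qed
qed

lemma envelope:
  fixes \<psi> :: "'a::euclidean_space \<Rightarrow> real"
  assumes X: "convex X" and x: "x \<in> X" and c: "c > 0"
    and wc: "\<And>a b t. a \<in> X \<Longrightarrow> b \<in> X \<Longrightarrow> 0 \<le> t \<Longrightarrow> t \<le> 1 \<Longrightarrow>
      \<psi> ((1 - t) *\<^sub>R a + t *\<^sub>R b) \<le> (1 - t) * \<psi> a + t * \<psi> b + c / 2 * t * (1 - t) * (norm (a - b))\<^sup>2"
    and bdd: "bdd_below ((\<lambda>u. \<psi> u + c * (norm (u - x))\<^sup>2) ` X)"
  shows "\<exists>p s. (\<forall>n. s n \<in> X) \<and> ((\<lambda>n. \<psi> (s n) + c * (norm (s n - x))\<^sup>2) \<longlonglongrightarrow> moreau \<psi> X (2 * c) x) \<and>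
     s \<longlonglongrightarrow> p \<and>
     (\<forall>u\<in>X. moreau \<psi> X (2 * c) x + c / 2 * (norm (u - p))\<^sup>2 \<le> \<psi> u + c * (norm (u - x))\<^sup>2) \<and>
     GDERIV (moreau \<psi> X (2 * c)) x :> (2 * c) *\<^sub>R (x - p)"
proof -
  define F where "F = (\<lambda>u. \<psi> u + c * (norm (u - x))\<^sup>2)"
  define M where "M = Inf (F ` X)"
  have Mx: "moreau \<psi> X (2 * c) y = (INF u\<in>X. \<psi> u + c * (norm (u - y))\<^sup>2)" for y
    unfolding moreau_def by simp
  have MM: "moreau \<psi> X (2 * c) x = M" unfolding Mx M_def F_def ..
  have Xne: "X \<noteq> {}" using x by auto
  have bddF: "bdd_below (F ` X)" using bdd unfolding F_def .
  have Mle: "M \<le> F u" if "u \<in> X" for u unfolding M_def by (rule cInf_lower[OF _ bddF]) (use that in auto)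
  have sc: "F ((1 - t) *\<^sub>R a + t *\<^sub>R b) \<le> (1 - t) * F a + t * F b - c / 2 * t * (1 - t) * (norm (a - b))\<^sup>2"
    if "a \<in> X" "b \<in> X" "0 \<le> t" "t \<le> 1" for a b t
  proof -
    have "(1 - t) *\<^sub>R a + t *\<^sub>R b - x = (1 - t) *\<^sub>R (a - x) + t *\<^sub>R (b - x)" by (simp add: algebra_simps)
    then have N: "(norm ((1 - t) *\<^sub>R a + t *\<^sub>R b - x))\<^sup>2 =
        (1 - t) * (norm (a - x))\<^sup>2 + t * (norm (b - x))\<^sup>2 - t * (1 - t) * (norm (a - b))\<^sup>2"
      using sq_comb[of t "a - x" "b - x"] by simp
    have Fw: "F ((1 - t) *\<^sub>R a + t *\<^sub>R b) = \<psi> ((1 - t) *\<^sub>R a + t *\<^sub>R b) +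
       c * ((1 - t) * (norm (a - x))\<^sup>2 + t * (norm (b - x))\<^sup>2 - t * (1 - t) * (norm (a - b))\<^sup>2)"
      unfolding F_def N ..
    have id: "(1 - t) * F a + t * F b - c / 2 * t * (1 - t) * (norm (a - b))\<^sup>2 -
       c * ((1 - t) * (norm (a - x))\<^sup>2 + t * (norm (b - x))\<^sup>2 - t * (1 - t) * (norm (a - b))\<^sup>2) =
       (1 - t) * \<psi> a + t * \<psi> b + c / 2 * t * (1 - t) * (norm (a - b))\<^sup>2"
      unfolding F_def by (simp add: field_simps)
    show ?thesis using wc[OF that] Fw id by linarith
  qed
  have inX: "(1 - t) *\<^sub>R a + t *\<^sub>R b \<in> X" if "a \<in> X" "b \<in> X" "0 \<le> t" "t \<le> 1" for a b t
    using X that by (simp add: convex_alt)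
  have "\<forall>n. \<exists>u\<in>X. F u < M + 1 / (real n + 1)"
  proof
    fix n
    have "Inf (F ` X) < M + 1 / (real n + 1)" unfolding M_def by simp
    then show "\<exists>u\<in>X. F u < M + 1 / (real n + 1)" using cInf_lessD[of "F ` X"] Xne by blast
  qed
  then obtain s where sX: "\<And>n. s n \<in> X" and sF: "\<And>n. F (s n) < M + 1 / (real n + 1)" by metis
  have Fs: "(\<lambda>n. F (s n)) \<longlonglongrightarrow> M"
  proof (rule tendsto_sandwich[of "\<lambda>n. M" _ _ "\<lambda>n. M + 1 / (real n + 1)"])
    show "\<forall>\<^sub>F n in sequentially. M \<le> F (s n)" using Mle sX by simp
    show "\<forall>\<^sub>F n in sequentially. F (s n) \<le> M + 1 / (real n + 1)" using sF by (simp add: less_imp_le)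
    have z: "(\<lambda>n. 1 / (real n + 1)) \<longlonglongrightarrow> 0"
      using LIMSEQ_inverse_real_of_nat by (simp add: inverse_eq_divide add.commute)
    have "(\<lambda>n. M + 1 / (real n + 1)) \<longlonglongrightarrow> M + 0"
      by (intro tendsto_intros z)
    then show "(\<lambda>n. M + 1 / (real n + 1)) \<longlonglongrightarrow> M" by simp
  qed simp
  have cau: "Cauchy s"
  proof (rule metric_CauchyI)
    fix e :: real assume e: "e > 0"
    obtain N :: nat where N: "8 / (c * e\<^sup>2) < real N + 1"
      using reals_Archimedean2[of "8 / (c * e\<^sup>2)"] by (metis add.commute add_strict_increasing zero_less_one less_imp_le)
    show "\<exists>N. \<forall>m\<ge>N. \<forall>n\<ge>N. dist (s m) (s n) < e"
    proof (intro exI[of _ N] allI impI)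
      fix m n assume mn: "m \<ge> N" "n \<ge> N"
      have "M \<le> F ((1 - 1/2) *\<^sub>R s m + (1/2) *\<^sub>R s n)" by (rule Mle[OF inX[OF sX sX]]) auto
      also have "\<dots> \<le> (1 - 1/2) * F (s m) + (1/2) * F (s n) - c / 2 * (1/2) * (1 - 1/2) * (norm (s m - s n))\<^sup>2"
        using sc[OF sX[of m] sX[of n], of "1/2"] by simp
      finally have "c / 8 * (norm (s m - s n))\<^sup>2 \<le> (F (s m) - M) / 2 + (F (s n) - M) / 2" by (simp add: field_simps)
      also have "\<dots> < 1 / (real m + 1) / 2 + 1 / (real n + 1) / 2" proof (rule add_strict_mono; rule divide_strict_right_mono)
        show "F (s m) - M < 1 / (real m + 1)" using sF[of m] by linarith
        show "F (s n) - M < 1 / (real n + 1)" using sF[of n] by linarith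
      qed simp_all
      also have "\<dots> \<le> 1 / (real N + 1) / 2 + 1 / (real N + 1) / 2"
        using mn by (intro add_mono divide_right_mono divide_left_mono) auto
      also have "1 / (real N + 1) / 2 + 1 / (real N + 1) / 2 = 1 / (real N + 1)" by (rule field_sum_of_halves)
      finally have A: "c / 8 * (norm (s m - s n))\<^sup>2 < 1 / (real N + 1)" .
      have "(norm (s m - s n))\<^sup>2 * (c * (real N + 1)) = 8 * ((c / 8 * (norm (s m - s n))\<^sup>2) * (real N + 1))" by simp
      also have "\<dots> < 8 * ((1 / (real N + 1)) * (real N + 1))"
        using A by (intro mult_strict_left_mono mult_strict_right_mono) auto
      also have "\<dots> = 8" by simp
      finally have "(norm (s m - s n))\<^sup>2 < 8 / (c * (real N + 1))" using c by (simp add: pos_less_divide_eq)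
      also have "\<dots> < e\<^sup>2"
      proof -
        have ce: "0 < c * e\<^sup>2" using c e by simp
        have N': "8 < (real N + 1) * (c * e\<^sup>2)" using N ce by (simp add: pos_divide_less_eq)
        have "0 < c * (real N + 1)" using c by simp
        then show ?thesis using N' by (simp add: pos_divide_less_eq ac_simps)
      qed
      finally have "(norm (s m - s n))\<^sup>2 < e\<^sup>2" .
      then show "dist (s m) (s n) < e" using e by (simp add: dist_norm power_less_imp_less_base)
    qed
  qed
  then obtain p where sp: "s \<longlonglongrightarrow> p" using Cauchy_convergent_iff convergent_def by blast
  have P1: "M + c / 2 * (norm (u - p))\<^sup>2 \<le> F u" if u: "u \<in> X" for u
  proof -
    have "c / 2 * (norm (u - p))\<^sup>2 \<le> F u - M"
    proof (rule field_le_mult_one_interval)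
      fix z :: real assume z: "0 < z" "z < 1"
      define t where "t = 1 - z"
      have t: "0 < t" "t < 1" using z by (auto simp: t_def)
      have ineq: "t * (1 - t) * (c / 2 * (norm (s n - u))\<^sup>2) \<le> (1 - t) * (F (s n) - M) + t * (F u - M)" for n
      proof -
        have "M \<le> F ((1 - t) *\<^sub>R s n + t *\<^sub>R u)" by (rule Mle[OF inX[OF sX u]]) (use t in auto)
        also have "\<dots> \<le> (1 - t) * F (s n) + t * F u - c / 2 * t * (1 - t) * (norm (s n - u))\<^sup>2"
          by (rule sc[OF sX u]) (use t in auto)
        finally show ?thesis by (simp add: algebra_simps)
      qed
      have l1: "(\<lambda>n. t * (1 - t) * (c / 2 * (norm (s n - u))\<^sup>2)) \<longlonglongrightarrow> t * (1 - t) * (c / 2 * (norm (p - u))\<^sup>2)"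
        by (intro tendsto_intros sp)
      have l2: "(\<lambda>n. (1 - t) * (F (s n) - M) + t * (F u - M)) \<longlonglongrightarrow> (1 - t) * (M - M) + t * (F u - M)"
        by (intro tendsto_intros Fs)
      have "t * (1 - t) * (c / 2 * (norm (p - u))\<^sup>2) \<le> (1 - t) * (M - M) + t * (F u - M)"
        by (rule LIMSEQ_le[OF l1 l2]) (use ineq in auto)
      then have "t * ((1 - t) * (c / 2 * (norm (p - u))\<^sup>2)) \<le> t * (F u - M)" by (simp add: algebra_simps)
      then have "(1 - t) * (c / 2 * (norm (p - u))\<^sup>2) \<le> F u - M" using t by simp
      then show "z * (c / 2 * (norm (u - p))\<^sup>2) \<le> F u - M" by (simp add: t_def norm_minus_commute)
    qed
    then show ?thesis by simp
  qed
  define g where "g = (2 * c) *\<^sub>R (x - p)"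
  have low: "M + h \<bullet> g - c * (norm h)\<^sup>2 \<le> \<psi> u + c * (norm (u - (x + h)))\<^sup>2" if u: "u \<in> X" for u h
  proof -
    have e1: "(norm (u - (x + h)))\<^sup>2 = (norm (u - x))\<^sup>2 - 2 * ((u - x) \<bullet> h) + (norm h)\<^sup>2"
      using sq_shift[of "u - x" h] by (simp add: algebra_simps)
    have e2: "(norm ((u - p) - 2 *\<^sub>R h))\<^sup>2 = (norm (u - p))\<^sup>2 - 4 * ((u - p) \<bullet> h) + 4 * (norm h)\<^sup>2"
      using sq_shift[of "u - p" "2 *\<^sub>R h"] by (simp add: power2_eq_square)
    have W: "0 \<le> c / 2 * (norm ((u - p) - 2 *\<^sub>R h))\<^sup>2" using c by simp
    have ea: "(u - x) \<bullet> h = (u - p) \<bullet> h - (x - p) \<bullet> h" by (simp add: inner_simps)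
    have eg: "h \<bullet> g = 2 * c * ((x - p) \<bullet> h)" by (simp add: g_def inner_commute)
    have P: "0 \<le> \<psi> u + c * (norm (u - x))\<^sup>2 - M - c / 2 * (norm (u - p))\<^sup>2" using P1[OF u] unfolding F_def by simp
    have "\<psi> u + c * (norm (u - (x + h)))\<^sup>2 - (M + h \<bullet> g - c * (norm h)\<^sup>2) =
       (\<psi> u + c * (norm (u - x))\<^sup>2 - M - c / 2 * (norm (u - p))\<^sup>2) + c / 2 * (norm ((u - p) - 2 *\<^sub>R h))\<^sup>2"
      unfolding e1 e2 ea eg by (simp add: field_simps)
    then show ?thesis using W P by linarith
  qed
  have bddh: "bdd_below ((\<lambda>u. \<psi> u + c * (norm (u - (x + h)))\<^sup>2) ` X)" for h
    using low by (auto simp: bdd_below_def)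
  have Mlow: "M + h \<bullet> g - c * (norm h)\<^sup>2 \<le> moreau \<psi> X (2 * c) (x + h)" for h
    unfolding Mx by (rule cINF_greatest[OF Xne low])
  have Mup: "moreau \<psi> X (2 * c) (x + h) \<le> M + h \<bullet> g + c * (norm h)\<^sup>2" for h
  proof -
    have le: "moreau \<psi> X (2 * c) (x + h) \<le> F (s n) - 2 * c * ((s n - x) \<bullet> h) + c * (norm h)\<^sup>2" for n
    proof -
      have e: "(norm (s n - (x + h)))\<^sup>2 = (norm (s n - x))\<^sup>2 - 2 * ((s n - x) \<bullet> h) + (norm h)\<^sup>2"
        using sq_shift[of "s n - x" h] by (simp add: algebra_simps)
      have "moreau \<psi> X (2 * c) (x + h) \<le> \<psi> (s n) + c * (norm (s n - (x + h)))\<^sup>2"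
        unfolding Mx by (rule cINF_lower[OF bddh sX])
      also have "\<dots> = F (s n) - 2 * c * ((s n - x) \<bullet> h) + c * (norm h)\<^sup>2"
        unfolding e F_def by (simp add: algebra_simps)
      finally show ?thesis .
    qed
    have l: "(\<lambda>n. F (s n) - 2 * c * ((s n - x) \<bullet> h) + c * (norm h)\<^sup>2) \<longlonglongrightarrow> M - 2 * c * ((p - x) \<bullet> h) + c * (norm h)\<^sup>2"
      by (intro tendsto_intros Fs sp)
    have "moreau \<psi> X (2 * c) (x + h) \<le> M - 2 * c * ((p - x) \<bullet> h) + c * (norm h)\<^sup>2"
      by (rule LIMSEQ_le_const[OF l]) (use le in auto)
    moreover have "h \<bullet> g = - (2 * c * ((p - x) \<bullet> h))" by (simp add: g_def inner_commute inner_simps algebra_simps)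
    ultimately show ?thesis by simp
  qed
  have gd: "GDERIV (moreau \<psi> X (2 * c)) x :> g"
  proof (rule deriv_from_quad[OF c])
    fix h
    show "\<bar>moreau \<psi> X (2 * c) (x + h) - moreau \<psi> X (2 * c) x - h \<bullet> g\<bar> \<le> c * (norm h)\<^sup>2"
      using Mlow[of h] Mup[of h] MM by (simp add: abs_le_iff)
  qed
  show ?thesis
    using sX Fs sp P1 gd unfolding MM g_def F_def by blast
qed

lemma MLx_diff: "multilin j A \<Longrightarrow> multilin j B \<Longrightarrow> multilin j (\<lambda>vs. A vs - B vs)"
  by (simp add: multilin_def algebra_simps)

lemma path_deriv:
  fixes h :: "'a::real_normed_vector \<Rightarrow> real"
  assumes S: "convex S" "a \<in> S" "b \<in> S" and t: "t \<in> {0..1}"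
    and d: "(h has_derivative D) (at (a + t *\<^sub>R (b - a)) within S)"
  shows "((\<lambda>t. h (a + t *\<^sub>R (b - a))) has_real_derivative D (b - a)) (at t within {0..1})"
proof -
  define g where "g = (\<lambda>t::real. a + t *\<^sub>R (b - a))"
  have gd: "(g has_derivative (\<lambda>s. s *\<^sub>R (b - a))) (at t within {0..1})"
    unfolding g_def by (auto intro!: derivative_eq_intros)
  have gS: "g ` {0..1} \<subseteq> S"
  proof
    fix w assume "w \<in> g ` {0..1}"
    then obtain s where s: "s \<in> {0..1}" "w = g s" by auto
    have "w = (1 - s) *\<^sub>R a + s *\<^sub>R b" using s by (simp add: g_def algebra_simps)
    then show "w \<in> S" using S s by (auto intro: convexD_alt)
  qed
  have c: "((h \<circ> g) has_derivative (D \<circ> (\<lambda>s. s *\<^sub>R (b - a)))) (at t within {0..1})"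
    by (rule diff_chain_within[OF gd]) (use has_derivative_subset[OF d gS] in \<open>simp add: g_def\<close>)
  have lin: "linear D" using d has_derivative_linear by blast
  have "D \<circ> (\<lambda>s. s *\<^sub>R (b - a)) = (*) (D (b - a))"
    by (rule ext) (simp add: linear_scale[OF lin] mult.commute)
  then show ?thesis using c unfolding has_field_derivative_def g_def by (simp add: comp_def)
qed

lemma smoothX:
  fixes h :: "'a::real_normed_vector \<Rightarrow> real"
  assumes S: "convex S" "a \<in> S" "b \<in> S"
    and d: "\<And>z. z \<in> S \<Longrightarrow> (h has_derivative Dh z) (at z within S)"
    and lip: "\<And>z1 z2. z1 \<in> S \<Longrightarrow> z2 \<in> S \<Longrightarrow> \<bar>Dh z1 (b - a) - Dh z2 (b - a)\<bar> \<le> L0 * norm (z1 - z2) * norm (b - a)"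
  shows "\<And>t. t \<in> {0..1} \<Longrightarrow> h ((1 - t) *\<^sub>R a + t *\<^sub>R b) \<le> (1 - t) * h a + t * h b + L0 / 2 * t * (1 - t) * (norm (a - b))\<^sup>2"
    and "\<And>t. t \<in> {0..1} \<Longrightarrow> (1 - t) * h a + t * h b - L0 / 2 * t * (1 - t) * (norm (a - b))\<^sup>2 \<le> h ((1 - t) *\<^sub>R a + t *\<^sub>R b)"
    and "h a + Dh a (b - a) - L0 / 2 * (norm (a - b))\<^sup>2 \<le> h b"
proof -
  define g where "g = (\<lambda>t. h (a + t *\<^sub>R (b - a)))"
  define g' where "g' = (\<lambda>t. Dh (a + t *\<^sub>R (b - a)) (b - a))"
  have inS: "a + t *\<^sub>R (b - a) \<in> S" if "t \<in> {0..1}" for t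
  proof -
    have "a + t *\<^sub>R (b - a) = (1 - t) *\<^sub>R a + t *\<^sub>R b" by (simp add: algebra_simps)
    then show ?thesis using S that by (auto intro: convexD_alt)
  qed
  have gd: "(g has_real_derivative g' t) (at t within {0..1})" if "t \<in> {0..1}" for t
    unfolding g_def g'_def by (rule path_deriv[OF S that d[OF inS[OF that]]])
  define L where "L = L0 * (norm (a - b))\<^sup>2"
  have gl: "\<bar>g' s - g' t\<bar> \<le> L * \<bar>s - t\<bar>" if "s \<in> {0..1}" "t \<in> {0..1}" for s t
  proof -
    have "\<bar>g' s - g' t\<bar> \<le> L0 * norm ((a + s *\<^sub>R (b - a)) - (a + t *\<^sub>R (b - a))) * norm (b - a)"
      unfolding g'_def by (rule lip[OF inS[OF that(1)] inS[OF that(2)]])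
    also have "norm ((a + s *\<^sub>R (b - a)) - (a + t *\<^sub>R (b - a))) = \<bar>s - t\<bar> * norm (b - a)"
      by (simp flip: scaleR_diff_left)
    finally show ?thesis by (simp add: L_def norm_minus_commute power2_eq_square ac_simps)
  qed
  have gdn: "((\<lambda>t. - g t) has_real_derivative - g' t) (at t within {0..1})" if "t \<in> {0..1}" for t
    using gd[OF that] by (rule derivative_intros)
  have gln: "\<bar>- g' s - - g' t\<bar> \<le> L * \<bar>s - t\<bar>" if "s \<in> {0..1}" "t \<in> {0..1}" for s t
    using gl[OF that] by simp
  have eq: "a + t *\<^sub>R (b - a) = (1 - t) *\<^sub>R a + t *\<^sub>R b" for t by (simp add: algebra_simps)
  have g0: "g 0 = h a" and g1: "g 1 = h b" by (simp_all add: g_def)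
  show "h ((1 - t) *\<^sub>R a + t *\<^sub>R b) \<le> (1 - t) * h a + t * h b + L0 / 2 * t * (1 - t) * (norm (a - b))\<^sup>2"
    if "t \<in> {0..1}" for t
    using smooth1d(1)[OF gd gl that] unfolding g_def eq L_def by (simp add: mult_ac)
  show "(1 - t) * h a + t * h b - L0 / 2 * t * (1 - t) * (norm (a - b))\<^sup>2 \<le> h ((1 - t) *\<^sub>R a + t *\<^sub>R b)"
    if "t \<in> {0..1}" for t
    using smooth1d(1)[OF gdn gln that] unfolding g_def eq L_def by (simp add: mult_ac)
  show "h a + Dh a (b - a) - L0 / 2 * (norm (a - b))\<^sup>2 \<le> h b"
    using smooth1d(2)[OF gd gl] unfolding g_def g'_def L_def by simp
qed

lemma sup_wc:
  fixes g :: "'x \<Rightarrow> 'y \<Rightarrow> real"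
  assumes Y: "Y \<noteq> {}" and bdd: "bdd_above (g a ` Y)" "bdd_above (g b ` Y)"
    and t: "0 \<le> t" "t \<le> 1"
    and h: "\<And>y. y \<in> Y \<Longrightarrow> g m y \<le> (1 - t) * g a y + t * g b y + K"
  shows "(SUP y\<in>Y. g m y) \<le> (1 - t) * (SUP y\<in>Y. g a y) + t * (SUP y\<in>Y. g b y) + K"
proof (rule cSUP_least[OF Y])
  fix y assume y: "y \<in> Y"
  have "g a y \<le> (SUP y\<in>Y. g a y)" "g b y \<le> (SUP y\<in>Y. g b y)"
    using cSUP_upper[OF y bdd(1)] cSUP_upper[OF y bdd(2)] by auto
  then have "(1 - t) * g a y + t * g b y \<le> (1 - t) * (SUP y\<in>Y. g a y) + t * (SUP y\<in>Y. g b y)"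
    using t by (intro add_mono mult_left_mono) auto
  then show "g m y \<le> (1 - t) * (SUP y\<in>Y. g a y) + t * (SUP y\<in>Y. g b y) + K" using h[OF y] by linarith
qed

lemma sup_close:
  fixes g1 g2 :: "'y \<Rightarrow> real"
  assumes Y: "Y \<noteq> {}" and bdd: "bdd_above (g1 ` Y)" "bdd_above (g2 ` Y)"
    and h: "\<And>y. y \<in> Y \<Longrightarrow> \<bar>g1 y - g2 y\<bar> \<le> e"
  shows "\<bar>(SUP y\<in>Y. g1 y) - (SUP y\<in>Y. g2 y)\<bar> \<le> e"
proof -
  have "(SUP y\<in>Y. g1 y) \<le> (SUP y\<in>Y. g2 y) + e"
  proof (rule cSUP_least[OF Y])
    fix y assume y: "y \<in> Y"
    show "g1 y \<le> (SUP y\<in>Y. g2 y) + e" using cSUP_upper[OF y bdd(2)] h[OF y] by linarith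
  qed
  moreover have "(SUP y\<in>Y. g2 y) \<le> (SUP y\<in>Y. g1 y) + e"
  proof (rule cSUP_least[OF Y])
    fix y assume y: "y \<in> Y"
    show "g2 y \<le> (SUP y\<in>Y. g1 y) + e" using cSUP_upper[OF y bdd(1)] h[OF y] by linarith
  qed
  ultimately show ?thesis by linarith
qed

lemma env_diff:
  fixes p1 p2 :: "'a::real_normed_vector"
  assumes c: "c > 0"
    and s1X: "\<And>n. s1 n \<in> X" and s1F: "(\<lambda>n. \<psi>1 (s1 n) + c * (norm (s1 n - x))\<^sup>2) \<longlonglongrightarrow> M1" and s1p: "s1 \<longlonglongrightarrow> p1"
    and P1: "\<forall>u\<in>X. M1 + c / 2 * (norm (u - p1))\<^sup>2 \<le> \<psi>1 u + c * (norm (u - x))\<^sup>2"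
    and s2X: "\<And>n. s2 n \<in> X" and s2F: "(\<lambda>n. \<psi>2 (s2 n) + c * (norm (s2 n - x))\<^sup>2) \<longlonglongrightarrow> M2" and s2p: "s2 \<longlonglongrightarrow> p2"
    and P2: "\<forall>u\<in>X. M2 + c / 2 * (norm (u - p2))\<^sup>2 \<le> \<psi>2 u + c * (norm (u - x))\<^sup>2"
    and close: "\<And>u. u \<in> X \<Longrightarrow> \<bar>\<psi>1 u - \<psi>2 u\<bar> \<le> e"
  shows "c * (norm (p1 - p2))\<^sup>2 \<le> 2 * e"
proof -
  have a: "M1 + c / 2 * (norm (p2 - p1))\<^sup>2 \<le> M2 + e"
  proof (rule LIMSEQ_le)
    show "(\<lambda>n. M1 + c / 2 * (norm (s2 n - p1))\<^sup>2) \<longlonglongrightarrow> M1 + c / 2 * (norm (p2 - p1))\<^sup>2"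
      by (intro tendsto_intros s2p)
    show "(\<lambda>n. \<psi>2 (s2 n) + c * (norm (s2 n - x))\<^sup>2 + e) \<longlonglongrightarrow> M2 + e"
      by (intro tendsto_intros s2F)
    show "\<exists>N. \<forall>n\<ge>N. M1 + c / 2 * (norm (s2 n - p1))\<^sup>2 \<le> \<psi>2 (s2 n) + c * (norm (s2 n - x))\<^sup>2 + e"
    proof (intro exI allI impI)
      fix n :: nat
      have "M1 + c / 2 * (norm (s2 n - p1))\<^sup>2 \<le> \<psi>1 (s2 n) + c * (norm (s2 n - x))\<^sup>2" using P1 s2X by blast
      moreover have "\<psi>1 (s2 n) \<le> \<psi>2 (s2 n) + e" using close[OF s2X[of n]] by (simp add: abs_le_iff)
      ultimately show "M1 + c / 2 * (norm (s2 n - p1))\<^sup>2 \<le> \<psi>2 (s2 n) + c * (norm (s2 n - x))\<^sup>2 + e" by linarith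
    qed
  qed
  have b: "M2 + c / 2 * (norm (p1 - p2))\<^sup>2 \<le> M1 + e"
  proof (rule LIMSEQ_le)
    show "(\<lambda>n. M2 + c / 2 * (norm (s1 n - p2))\<^sup>2) \<longlonglongrightarrow> M2 + c / 2 * (norm (p1 - p2))\<^sup>2"
      by (intro tendsto_intros s1p)
    show "(\<lambda>n. \<psi>1 (s1 n) + c * (norm (s1 n - x))\<^sup>2 + e) \<longlonglongrightarrow> M1 + e"
      by (intro tendsto_intros s1F)
    show "\<exists>N. \<forall>n\<ge>N. M2 + c / 2 * (norm (s1 n - p2))\<^sup>2 \<le> \<psi>1 (s1 n) + c * (norm (s1 n - x))\<^sup>2 + e"
    proof (intro exI allI impI)
      fix n :: nat
      have "M2 + c / 2 * (norm (s1 n - p2))\<^sup>2 \<le> \<psi>2 (s1 n) + c * (norm (s1 n - x))\<^sup>2" using P2 s1X by blast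
      moreover have "\<psi>2 (s1 n) \<le> \<psi>1 (s1 n) + e" using close[OF s1X[of n]] by (simp add: abs_le_iff)
      ultimately show "M2 + c / 2 * (norm (s1 n - p2))\<^sup>2 \<le> \<psi>1 (s1 n) + c * (norm (s1 n - x))\<^sup>2 + e" by linarith
    qed
  qed
  have "norm (p2 - p1) = norm (p1 - p2)" by (rule norm_minus_commute)
  then show ?thesis using a b by simp
qed

lemma seg_in:
  assumes "convex S" "a \<in> S" "b \<in> S" "t \<in> {0..1}"
  shows "a + t *\<^sub>R (b - a) \<in> S"
proof -
  have "a + t *\<^sub>R (b - a) = (1 - t) *\<^sub>R a + t *\<^sub>R b" by (simp add: algebra_simps)
  then show ?thesis using assms by (auto intro: convexD_alt)
qed

lemma Qderiv:
  fixes f :: "'a \<Rightarrow> 'b::euclidean_space \<Rightarrow> real"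
  assumes Y: "convex Y" and ex: "ydiff_exists f X Y k" and x: "x \<in> X" and yh: "yh \<in> Y" and y: "y \<in> Y"
    and j: "j < k" and t: "t \<in> {0..1}"
  shows "((\<lambda>t. ydiff f Y j x (yh + t *\<^sub>R (y - yh)) (replicate j (y - yh))) has_real_derivative
           ydiff f Y (Suc j) x (yh + t *\<^sub>R (y - yh)) (replicate (Suc j) (y - yh))) (at t within {0..1})"
proof -
  let ?z = "yh + t *\<^sub>R (y - yh)"
  have z: "?z \<in> Y" using seg_in[OF Y yh y t] .
  have "(\<lambda>y'. ydiff f Y j x y' (replicate j (y - yh))) differentiable (at ?z within Y)"
    using ex x z j unfolding ydiff_exists_def by auto
  then have d: "((\<lambda>y'. ydiff f Y j x y' (replicate j (y - yh))) has_derivative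
      frechet_derivative (\<lambda>y'. ydiff f Y j x y' (replicate j (y - yh))) (at ?z within Y)) (at ?z within Y)"
    using frechet_derivative_works by blast
  show ?thesis using path_deriv[OF Y yh y t d] by simp
qed

lemma taylor_err:
  fixes f :: "'a::real_normed_vector \<Rightarrow> 'b::euclidean_space \<Rightarrow> real"
  assumes Y: "convex Y" "interior Y \<noteq> {}" and ex: "ydiff_exists f X Y k"
    and lip: "\<forall>x\<in>X. \<forall>x'\<in>X. \<forall>y\<in>Y. \<forall>y'\<in>Y.
        tnorm k (\<lambda>vs. ydiff f Y k x' y' vs - ydiff f Y k x y vs) \<le> \<rho> * norm (y' - y) + \<sigma> * norm (x' - x)"
    and x: "x \<in> X" and yh: "yh \<in> Y" and y: "y \<in> Y"
  shows "\<bar>f x y - taylor_model f Y k yh x y\<bar> \<le> \<rho> * norm (y - yh) ^ (Suc k) / fact (Suc k)"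
proof -
  define v where "v = y - yh"
  define Q where "Q = (\<lambda>j t. ydiff f Y j x (yh + t *\<^sub>R v) (replicate j v))"
  have dQ: "(Q j has_real_derivative Q (Suc j) t) (at t within {0..1})" if "j < k" "t \<in> {0..1}" for j t
    unfolding Q_def v_def using Qderiv[OF Y(1) ex x yh y that] .
  have hQ: "\<bar>Q k t - Q k 0\<bar> \<le> (\<rho> * norm v ^ Suc k) * t + 0" if t: "t \<in> {0..1}" for t
  proof -
    have z: "yh + t *\<^sub>R v \<in> Y" unfolding v_def using seg_in[OF Y(1) yh y t] .
    let ?T = "\<lambda>vs. ydiff f Y k x (yh + t *\<^sub>R v) vs - ydiff f Y k x yh vs"
    have ml: "multilin k ?T"
      by (rule MLx_diff; rule ydiff_multilin[OF Y ex x, rule_format]) (use z yh in auto)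
    have "\<bar>Q k t - Q k 0\<bar> = \<bar>?T (replicate k v)\<bar>" by (simp add: Q_def)
    also have "\<dots> \<le> tnorm k ?T * norm v ^ k" by (rule MLx_tnorm(1)[OF ml])
    also have "\<dots> \<le> (\<rho> * norm (t *\<^sub>R v)) * norm v ^ k"
      using lip[rule_format, OF x x yh z] by (intro mult_right_mono) simp_all
    also have "\<dots> = (\<rho> * norm v ^ Suc k) * t" using t by (simp add: ac_simps)
    finally show ?thesis by simp
  qed
  have "\<bar>Q 0 1 - (\<Sum>j\<le>k. Q j 0 * 1 ^ j / fact j)\<bar> \<le> (\<rho> * norm v ^ Suc k) * 1 ^ Suc k / fact (Suc k) + 0 * 1 ^ k / fact k"
    using bspec[OF taylor_bound[of k Q "\<rho> * norm v ^ Suc k" 0, OF dQ hQ], of 1] by simp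
  moreover have "Q 0 1 = f x y" by (simp add: Q_def v_def)
  moreover have "(\<Sum>j\<le>k. Q j 0 * 1 ^ j / fact j) = taylor_model f Y k yh x y"
    by (simp add: Q_def v_def taylor_model_def)
  ultimately show ?thesis by (simp add: v_def)
qed

lemma taylor_wc:
  fixes f :: "'a::euclidean_space \<Rightarrow> 'b::euclidean_space \<Rightarrow> real"
  assumes X: "convex X" "interior X \<noteq> {}" and Y: "convex Y" "interior Y \<noteq> {}"
    and ex: "ydiff_exists f X Y k" and exx: "xydiff_exists f X Y k"
    and tl: "\<forall>x\<in>X. \<forall>x'\<in>X. \<forall>y\<in>Y.
           xynorm k (\<lambda>u vs. xydiff f X Y k x' y u vs - xydiff f X Y k x y u vs) \<le> \<tau> * norm (x' - x)"
    and a: "a \<in> X" and b: "b \<in> X" and yh: "yh \<in> Y" and y: "y \<in> Y" and s: "s \<in> {0..1}"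
    and fwc: "f ((1 - s) *\<^sub>R a + s *\<^sub>R b) y \<le> (1 - s) * f a y + s * f b y + lam / 2 * s * (1 - s) * (norm (a - b))\<^sup>2"
    and tau0: "\<tau> \<ge> 0" and vD: "norm (y - yh) \<le> D"
  shows "taylor_model f Y k yh ((1 - s) *\<^sub>R a + s *\<^sub>R b) y \<le>
     (1 - s) * taylor_model f Y k yh a y + s * taylor_model f Y k yh b y +
     (lam + 2 * \<tau> * D ^ k / fact k) / 2 * s * (1 - s) * (norm (a - b))\<^sup>2"
proof -
  define m where "m = (1 - s) *\<^sub>R a + s *\<^sub>R b"
  have mX: "m \<in> X" unfolding m_def using X(1) a b s by (auto intro: convexD_alt)
  define v where "v = y - yh"
  define W where "W = s * (1 - s) * (norm (a - b))\<^sup>2"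
  have W0: "W \<ge> 0" using s by (simp add: W_def)
  have GS: "\<bar>(1 - s) * ydiff f Y k a y' (replicate k v) + s * ydiff f Y k b y' (replicate k v)
              - ydiff f Y k m y' (replicate k v)\<bar> \<le> \<tau> * norm v ^ k / 2 * W" if y': "y' \<in> Y" for y'
  proof -
    let ?h = "\<lambda>z. ydiff f Y k z y' (replicate k v)"
    let ?Dh = "\<lambda>z u. xydiff f X Y k z y' u (replicate k v)"
    have d: "(?h has_derivative ?Dh z) (at z within X)" if z: "z \<in> X" for z
    proof -
      have "?h differentiable (at z within X)" using exx z y' unfolding xydiff_exists_def by auto
      then show ?thesis unfolding xydiff_def using frechet_derivative_works by blast
    qed
    have lip: "\<bar>?Dh z1 (b - a) - ?Dh z2 (b - a)\<bar> \<le> (\<tau> * norm v ^ k) * norm (z1 - z2) * norm (b - a)"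
      if z: "z1 \<in> X" "z2 \<in> X" for z1 z2
    proof -
      let ?T = "\<lambda>u vs. xydiff f X Y k z1 y' u vs - xydiff f X Y k z2 y' u vs"
      have lin: "linear (\<lambda>u. ?T u vs)" if "length vs = k" for vs
        by (rule linear_compose_sub; rule xydiff_multilin(1)[OF X Y ex exx _ y' that]) (use z in auto)
      have ml: "multilin k (?T u)" for u
        by (rule MLx_diff; rule xydiff_multilin(2)[OF X Y ex exx _ y']) (use z in auto)
      have "\<bar>?Dh z1 (b - a) - ?Dh z2 (b - a)\<bar> \<le> xynorm k ?T * norm (b - a) * norm v ^ k"
        using MLx_xynorm(1)[OF lin ml, of "b - a" v] by simp
      also have "\<dots> \<le> (\<tau> * norm (z1 - z2)) * norm (b - a) * norm v ^ k"
        using tl[rule_format, OF z(2) z(1) y'] by (intro mult_right_mono) simp_all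
      finally show ?thesis by (simp add: ac_simps)
    qed
    have s01: "s \<in> {0..1}" using s .
    have u1: "?h m \<le> (1 - s) * ?h a + s * ?h b + (\<tau> * norm v ^ k) / 2 * s * (1 - s) * (norm (a - b))\<^sup>2"
      unfolding m_def by (rule smoothX(1)[OF X(1) a b d lip s01])
    have u2: "(1 - s) * ?h a + s * ?h b - (\<tau> * norm v ^ k) / 2 * s * (1 - s) * (norm (a - b))\<^sup>2 \<le> ?h m"
      unfolding m_def by (rule smoothX(2)[OF X(1) a b d lip s01])
    have eqK: "(\<tau> * norm v ^ k) / 2 * s * (1 - s) * (norm (a - b))\<^sup>2 = \<tau> * norm v ^ k / 2 * W"
      by (simp add: W_def)
    show ?thesis using u1[unfolded eqK] u2[unfolded eqK] unfolding abs_le_iff by linarith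
  qed
  define q where "q = (\<lambda>z j t. ydiff f Y j z (yh + t *\<^sub>R v) (replicate j v))"
  define Qc where "Qc = (\<lambda>j t. (1 - s) * q a j t + s * q b j t - q m j t)"
  have dq: "(q z j has_real_derivative q z (Suc j) t) (at t within {0..1})" if "z \<in> X" "j < k" "t \<in> {0..1}" for z j t
    unfolding q_def v_def using Qderiv[OF Y(1) ex that(1) yh y that(2,3)] .
  have dQ: "(Qc j has_real_derivative Qc (Suc j) t) (at t within {0..1})" if "j < k" "t \<in> {0..1}" for j t
    unfolding Qc_def by (rule DERIV_diff[OF DERIV_add[OF DERIV_cmult[OF dq[OF a that]] DERIV_cmult[OF dq[OF b that]]] dq[OF mX that]])
  have hQ: "\<bar>Qc k t - Qc k 0\<bar> \<le> 0 * t + \<tau> * norm v ^ k * W" if t: "t \<in> {0..1}" for t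
  proof -
    have z: "yh + t *\<^sub>R v \<in> Y" unfolding v_def using seg_in[OF Y(1) yh y t] .
    have "\<bar>Qc k t\<bar> \<le> \<tau> * norm v ^ k / 2 * W" using GS[OF z] by (simp add: Qc_def q_def)
    moreover have "\<bar>Qc k 0\<bar> \<le> \<tau> * norm v ^ k / 2 * W" using GS[OF yh] by (simp add: Qc_def q_def)
    ultimately show ?thesis by (simp add: abs_le_iff) linarith
  qed
  have tb: "\<bar>Qc 0 1 - (\<Sum>j\<le>k. Qc j 0 * 1 ^ j / fact j)\<bar> \<le> 0 * 1 ^ Suc k / fact (Suc k) + (\<tau> * norm v ^ k * W) * 1 ^ k / fact k"
    using bspec[OF taylor_bound[of k Qc 0 "\<tau> * norm v ^ k * W", OF dQ hQ], of 1] by simp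
  have e1: "Qc 0 1 = (1 - s) * f a y + s * f b y - f m y" by (simp add: Qc_def q_def v_def)
  have e2: "(\<Sum>j\<le>k. Qc j 0 * 1 ^ j / fact j) =
      (1 - s) * taylor_model f Y k yh a y + s * taylor_model f Y k yh b y - taylor_model f Y k yh m y"
    by (simp add: Qc_def q_def v_def taylor_model_def sum_subtractf sum.distrib sum_distrib_left
        diff_divide_distrib add_divide_distrib)
  have bnd: "\<tau> * norm v ^ k * W / fact k \<le> \<tau> * D ^ k * W / fact k"
    using tau0 W0 vD by (intro divide_right_mono mult_right_mono mult_left_mono power_mono) (auto simp: v_def)
  have fm: "f m y \<le> (1 - s) * f a y + s * f b y + lam / 2 * W" using fwc by (simp add: m_def W_def)
  have eq: "(lam + 2 * \<tau> * D ^ k / fact k) / 2 * s * (1 - s) * (norm (a - b))\<^sup>2 = lam / 2 * W + \<tau> * D ^ k * W / fact k"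
    by (simp add: W_def field_simps)
  have tb2: "\<bar>((1 - s) * f a y + s * f b y - f m y) -
      ((1 - s) * taylor_model f Y k yh a y + s * taylor_model f Y k yh b y - taylor_model f Y k yh m y)\<bar>
      \<le> \<tau> * norm v ^ k * W / fact k"
    using tb unfolding e1 e2 by simp
  show ?thesis unfolding m_def[symmetric] eq using tb2 bnd fm unfolding abs_le_iff by linarith
qed

theorem proposition1:
  fixes f :: "'a::euclidean_space \<Rightarrow> 'b::euclidean_space \<Rightarrow> real"
    and X :: "'a set" and Y :: "'b set"
    and k :: nat and yh :: 'b
    and D lam \<rho> \<sigma> \<tau> :: real and \<mu> :: ereal
  assumes X: "convex X" "interior X \<noteq> {}"
    and Y: "convex Y" "interior Y \<noteq> {}" "compact Y"
    and D: "diameter Y \<le> D"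
    and yh: "yh \<in> Y"
    (* (i) *)
    and gx_ex: "xydiff_exists f X Y 0"
    and gx_lip: "\<forall>x\<in>X. \<forall>x'\<in>X. \<forall>y\<in>Y. \<forall>y'\<in>Y.
        ereal (xynorm 0 (\<lambda>u vs. xydiff f X Y 0 x' y' u vs - xydiff f X Y 0 x y u vs))
          \<le> ereal (lam * norm (x' - x)) + \<mu> * ereal (norm (y' - y))"
    (* (ii) *)
    and yk_ex: "ydiff_exists f X Y k"
    and yk_lip: "\<forall>x\<in>X. \<forall>x'\<in>X. \<forall>y\<in>Y. \<forall>y'\<in>Y.
        tnorm k (\<lambda>vs. ydiff f Y k x' y' vs - ydiff f Y k x y vs)
          \<le> \<rho> * norm (y' - y) + \<sigma> * norm (x' - x)"
    and yk_ac: "\<forall>y\<in>Y. abs_cont_tensor k X (\<lambda>x vs. ydiff f Y k x y vs)"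
    (* (iii) *)
    and iii: "k \<ge> 1 \<Longrightarrow>
        xydiff_exists f X Y k \<and>
        (\<forall>x\<in>X. \<forall>x'\<in>X. \<forall>y\<in>Y.
           xynorm k (\<lambda>u vs. xydiff f X Y k x' y u vs - xydiff f X Y k x y u vs)
             \<le> \<tau> * norm (x' - x)) \<and>
        {(x, y). x \<in> X \<and> y \<in> Ybad f X Y k x} \<in> sets lebesgue \<and>
        (\<forall>x\<in>X. \<forall>y\<in>Y. \<forall>\<epsilon>>0. \<exists>\<delta>>0. \<forall>y'\<in>Y. dist y' y < \<delta> \<longrightarrow>
           tnorm k (\<lambda>vs. ydiff f Y k x y' vs - ydiff f Y k x y vs) < \<epsilon>)"
  shows "\<forall>x\<in>X.
    (let lbar = lam + (if k \<ge> 1 then 2 * \<tau> * D ^ k / fact k else 0) in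
     \<exists>g gh.
       GDERIV (moreau (primal (taylor_model f Y k yh) Y) X (2 * lbar)) x :> gh \<and>
       GDERIV (moreau (primal f Y) X (2 * lbar)) x :> g \<and>
       norm (gh - g) \<le> sqrt (8 * lbar * \<rho> * D ^ (k + 1) / fact (k + 1)))"
proof -
  define Tm where "Tm = taylor_model f Y k yh"
  define \<epsilon> where "\<epsilon> = \<rho> * D ^ (k + 1) / fact (k + 1)"
  define lbar where "lbar = lam + (if k \<ge> 1 then 2 * \<tau> * D ^ k / fact k else 0)"
  have Yne: "Y \<noteq> {}" using yh by auto
  have bY: "bounded Y" using Y(3) compact_imp_bounded by auto
  have vD: "norm (y - yh) \<le> D" if "y \<in> Y" for y
    using diameter_bounded_bound[OF bY that yh] D by (simp add: dist_norm)
  have D0: "0 \<le> D" using vD[OF yh] by simp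
  have two: "\<exists>p q. p \<in> S \<and> q \<in> S \<and> p \<noteq> q" if nS: "interior S \<noteq> {}" for S :: "'c::euclidean_space set"
  proof -
    obtain p where p: "p \<in> interior S" using nS by blast
    then obtain r where r: "r > 0" "ball p r \<subseteq> S" using mem_interior by blast
    obtain e :: 'c where e: "e \<in> Basis" using nonempty_Basis by blast
    have "p + (r / 2) *\<^sub>R e \<in> S" using r e by (intro subsetD[OF r(2)]) (simp add: dist_norm)
    moreover have "p \<in> S" using p interior_subset by blast
    moreover have "p + (r / 2) *\<^sub>R e \<noteq> p" using r e by (auto simp: nonzero_Basis)
    ultimately show ?thesis by blast
  qed
  obtain x0 x1 where x01: "x0 \<in> X" "x1 \<in> X" "x0 \<noteq> x1" using two[OF X(2)] by blast
  obtain y0 y1 where y01: "y0 \<in> Y" "y1 \<in> Y" "y0 \<noteq> y1" using two[OF Y(2)] by blast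
  have ex0: "ydiff_exists f X Y 0" by (simp add: ydiff_exists_def)
  have MLy: "multilin j (ydiff f Y j x y)" if "x \<in> X" "y \<in> Y" "j \<le> k" for x y j
    using ydiff_multilin[OF Y(1,2) yk_ex that(1) that(3)] that(2) by blast
  have xyn0: "xynorm 0 (\<lambda>u vs. xydiff f X Y 0 x1 y u vs - xydiff f X Y 0 x2 y u vs) \<le> lam * norm (x1 - x2)"
    if "x1 \<in> X" "x2 \<in> X" "y \<in> Y" for x1 x2 y
    using gx_lip[rule_format, OF that(2) that(1) that(3) that(3)] by (simp add: zero_ereal_def[symmetric])
  have gl: "\<bar>xydiff f X Y 0 x1 y u [] - xydiff f X Y 0 x2 y u []\<bar> \<le> lam * norm (x1 - x2) * norm u \<and>
            0 \<le> xynorm 0 (\<lambda>u vs. xydiff f X Y 0 x1 y u vs - xydiff f X Y 0 x2 y u vs)"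
    if z: "x1 \<in> X" "x2 \<in> X" "y \<in> Y" for x1 x2 y u
  proof -
    let ?T = "\<lambda>u vs. xydiff f X Y 0 x1 y u vs - xydiff f X Y 0 x2 y u vs"
    have lin: "linear (\<lambda>u. ?T u vs)" if "length vs = 0" for vs
      by (rule linear_compose_sub; rule xydiff_multilin(1)[OF X Y(1,2) ex0 gx_ex _ z(3) that]) (use z in auto)
    have ml: "multilin 0 (?T u)" for u by (simp add: multilin_def)
    have "\<bar>?T u (replicate 0 yh)\<bar> \<le> xynorm 0 ?T * norm u * norm yh ^ 0" by (rule MLx_xynorm(1)[OF lin ml])
    also have "\<dots> \<le> lam * norm (x1 - x2) * norm u"
      using xyn0[OF z] by (simp add: mult_right_mono)
    finally show ?thesis using MLx_xynorm(2)[OF lin ml] by simp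
  qed
  have lam0: "lam \<ge> 0"
  proof -
    have "0 \<le> lam * norm (x1 - x0)" using conjunct2[OF gl[OF x01(2,1) yh, of 0]] xyn0[OF x01(2,1) yh] by linarith
    then show ?thesis using x01 by (simp add: zero_le_mult_iff)
  qed
  have rho0: "\<rho> \<ge> 0"
  proof -
    let ?T = "\<lambda>vs. ydiff f Y k x0 y1 vs - ydiff f Y k x0 y0 vs"
    have "multilin k ?T" by (rule MLx_diff; rule MLy) (use x01 y01 in auto)
    then have "0 \<le> tnorm k ?T" by (rule MLx_tnorm(2))
    also have "\<dots> \<le> \<rho> * norm (y1 - y0)" using yk_lip[rule_format, OF x01(1) x01(1) y01(1) y01(2)] by simp
    finally show ?thesis using y01 by (simp add: zero_le_mult_iff)
  qed
  have fsm: "(\<forall>t\<in>{0..1}. f ((1 - t) *\<^sub>R a + t *\<^sub>R b) y \<le> (1 - t) * f a y + t * f b y + lam / 2 * t * (1 - t) * (norm (a - b))\<^sup>2)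
       \<and> f a y + xydiff f X Y 0 a y (b - a) [] - lam / 2 * (norm (a - b))\<^sup>2 \<le> f b y"
    if ab: "a \<in> X" "b \<in> X" and y: "y \<in> Y" for a b y
  proof -
    let ?h = "\<lambda>z. f z y"
    let ?Dh = "\<lambda>z u. xydiff f X Y 0 z y u []"
    have d: "(?h has_derivative ?Dh z) (at z within X)" if z: "z \<in> X" for z
    proof -
      have "(\<lambda>x'. ydiff f Y 0 x' y []) differentiable (at z within X)"
        using gx_ex z y unfolding xydiff_exists_def by auto
      then show ?thesis unfolding xydiff_def using frechet_derivative_works by auto
    qed
    have lip: "\<bar>?Dh z1 (b - a) - ?Dh z2 (b - a)\<bar> \<le> lam * norm (z1 - z2) * norm (b - a)"
      if "z1 \<in> X" "z2 \<in> X" for z1 z2 using gl[OF that y] by blast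
    show ?thesis using smoothX(1,3)[OF X(1) ab d lip] by blast
  qed
  have tay: "\<bar>f x y - Tm x y\<bar> \<le> \<epsilon>" if "x \<in> X" "y \<in> Y" for x y
  proof -
    have "\<bar>f x y - Tm x y\<bar> \<le> \<rho> * norm (y - yh) ^ (Suc k) / fact (Suc k)"
      unfolding Tm_def by (rule taylor_err[OF Y(1,2) yk_ex yk_lip that(1) yh that(2)])
    also have "\<dots> \<le> \<epsilon>"
    proof -
      have "norm (y - yh) ^ Suc k \<le> D ^ Suc k" by (rule power_mono[OF vD[OF that(2)]]) simp
      then have "\<rho> * norm (y - yh) ^ Suc k \<le> \<rho> * D ^ Suc k" using rho0 by (rule mult_left_mono)
      then show ?thesis unfolding \<epsilon>_def by (simp add: divide_right_mono del: power_Suc fact_Suc)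
    qed
    finally show ?thesis .
  qed
  have eps0: "\<epsilon> \<ge> 0" using tay[OF x01(1) yh] by linarith
  have bddT: "bdd_above (Tm x ` Y) \<and> bdd_above ((\<lambda>y. f x y) ` Y)" if x: "x \<in> X" for x
  proof -
    define B where "B = (\<Sum>j\<le>k. tnorm j (ydiff f Y j x yh) * D ^ j / fact j)"
    have TB: "Tm x y \<le> B" if y: "y \<in> Y" for y
    proof -
      have "Tm x y \<le> \<bar>Tm x y\<bar>" by simp
      also have "\<dots> \<le> (\<Sum>j\<le>k. \<bar>ydiff f Y j x yh (replicate j (y - yh)) / fact j\<bar>)"
        unfolding Tm_def taylor_model_def by (rule sum_abs)
      also have "\<dots> \<le> B" unfolding B_def
      proof (rule sum_mono)
        fix j assume j: "j \<in> {..k}"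
        have ml: "multilin j (ydiff f Y j x yh)" using MLy[OF x yh] j by simp
        have "\<bar>ydiff f Y j x yh (replicate j (y - yh))\<bar> \<le> tnorm j (ydiff f Y j x yh) * norm (y - yh) ^ j"
          by (rule MLx_tnorm(1)[OF ml])
        also have "\<dots> \<le> tnorm j (ydiff f Y j x yh) * D ^ j"
          using MLx_tnorm(2)[OF ml] vD[OF y] by (intro mult_left_mono power_mono) auto
        finally show "\<bar>ydiff f Y j x yh (replicate j (y - yh)) / fact j\<bar> \<le> tnorm j (ydiff f Y j x yh) * D ^ j / fact j"
          by (simp add: divide_right_mono)
      qed
      finally show ?thesis .
    qed
    have "f x y \<le> B + \<epsilon>" if "y \<in> Y" for y using TB[OF that] tay[OF x that] by linarith
    then show ?thesis using TB unfolding bdd_above_def by blast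
  qed
  have tau0: "k \<ge> 1 \<Longrightarrow> \<tau> \<ge> 0"
  proof -
    assume k1: "k \<ge> 1"
    have tl: "\<forall>x\<in>X. \<forall>x'\<in>X. \<forall>y\<in>Y.
           xynorm k (\<lambda>u vs. xydiff f X Y k x' y u vs - xydiff f X Y k x y u vs) \<le> \<tau> * norm (x' - x)"
      using iii[OF k1] by blast
    have exx: "xydiff_exists f X Y k" using iii[OF k1] by blast
    let ?T = "\<lambda>u vs. xydiff f X Y k x1 yh u vs - xydiff f X Y k x0 yh u vs"
    have lin: "linear (\<lambda>u. ?T u vs)" if "length vs = k" for vs
      by (rule linear_compose_sub; rule xydiff_multilin(1)[OF X Y(1,2) yk_ex exx _ yh that]) (use x01 in auto)
    have ml: "multilin k (?T u)" for u
      by (rule MLx_diff; rule xydiff_multilin(2)[OF X Y(1,2) yk_ex exx _ yh]) (use x01 in auto)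
    have "0 \<le> xynorm k ?T" by (rule MLx_xynorm(2)[OF lin ml])
    also have "\<dots> \<le> \<tau> * norm (x1 - x0)" using tl[rule_format, OF x01(1) x01(2) yh] .
    finally show ?thesis using x01 by (simp add: zero_le_mult_iff)
  qed
  have lbar_ge: "lam \<le> lbar" using tau0 D0 by (auto simp: lbar_def)
  have lbar0: "lbar \<ge> 0" using lam0 lbar_ge by linarith
  have fwc: "f ((1 - t) *\<^sub>R a + t *\<^sub>R b) y \<le> (1 - t) * f a y + t * f b y + lbar / 2 * t * (1 - t) * (norm (a - b))\<^sup>2"
    if "a \<in> X" "b \<in> X" "y \<in> Y" "0 \<le> t" "t \<le> 1" for a b t y
  proof -
    have "lam / 2 * t * (1 - t) * (norm (a - b))\<^sup>2 \<le> lbar / 2 * t * (1 - t) * (norm (a - b))\<^sup>2"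
      using lbar_ge that by (intro mult_right_mono) auto
    moreover have "f ((1 - t) *\<^sub>R a + t *\<^sub>R b) y \<le> (1 - t) * f a y + t * f b y + lam / 2 * t * (1 - t) * (norm (a - b))\<^sup>2"
      using fsm[OF that(1-3)] that(4,5) by simp
    ultimately show ?thesis by linarith
  qed
  have Twc: "Tm ((1 - t) *\<^sub>R a + t *\<^sub>R b) y \<le> (1 - t) * Tm a y + t * Tm b y + lbar / 2 * t * (1 - t) * (norm (a - b))\<^sup>2"
    if ab: "a \<in> X" "b \<in> X" and y: "y \<in> Y" and t: "0 \<le> t" "t \<le> 1" for a b t y
  proof (cases "k \<ge> 1")
    case True
    have tl: "\<forall>x\<in>X. \<forall>x'\<in>X. \<forall>y\<in>Y.
           xynorm k (\<lambda>u vs. xydiff f X Y k x' y u vs - xydiff f X Y k x y u vs) \<le> \<tau> * norm (x' - x)"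
      using iii[OF True] by blast
    have exx: "xydiff_exists f X Y k" using iii[OF True] by blast
    have "Tm ((1 - t) *\<^sub>R a + t *\<^sub>R b) y \<le> (1 - t) * Tm a y + t * Tm b y +
       (lam + 2 * \<tau> * D ^ k / fact k) / 2 * t * (1 - t) * (norm (a - b))\<^sup>2"
      unfolding Tm_def
    proof (rule taylor_wc[OF X Y(1,2) yk_ex exx tl ab yh y _ _ tau0[OF True] vD[OF y]])
      show "t \<in> {0..1}" using t by simp
      show "f ((1 - t) *\<^sub>R a + t *\<^sub>R b) y \<le> (1 - t) * f a y + t * f b y + lam / 2 * t * (1 - t) * (norm (a - b))\<^sup>2"
        using fsm[OF ab y] t by simp
    qed
    then show ?thesis using True by (simp add: lbar_def)
  next
    case False
    then have k0: "k = 0" by simp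
    have e: "Tm z y = f z yh" for z by (simp add: Tm_def taylor_model_def k0)
    show ?thesis unfolding e using fwc[OF ab yh t] .
  qed
  define \<phi> where "\<phi> = primal f Y"
  define \<phi>h where "\<phi>h = primal Tm Y"
  have \<phi>_def': "\<phi> x = (SUP y\<in>Y. f x y)" for x by (simp add: \<phi>_def primal_def)
  have \<phi>h_def': "\<phi>h x = (SUP y\<in>Y. Tm x y)" for x by (simp add: \<phi>h_def primal_def)
  have comb: "(1 - t) *\<^sub>R a + t *\<^sub>R b \<in> X" if "a \<in> X" "b \<in> X" "0 \<le> t" "t \<le> 1" for a b t
    using X(1) that by (auto intro: convexD_alt)
  have \<phi>wc: "\<phi> ((1 - t) *\<^sub>R a + t *\<^sub>R b) \<le> (1 - t) * \<phi> a + t * \<phi> b + lbar / 2 * t * (1 - t) * (norm (a - b))\<^sup>2"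
    if "a \<in> X" "b \<in> X" "0 \<le> t" "t \<le> 1" for a b t
    unfolding \<phi>_def' by (rule sup_wc[OF Yne conjunct2[OF bddT[OF that(1)]] conjunct2[OF bddT[OF that(2)]] that(3,4) fwc[OF that(1,2) _ that(3,4)]])
  have \<phi>hwc: "\<phi>h ((1 - t) *\<^sub>R a + t *\<^sub>R b) \<le> (1 - t) * \<phi>h a + t * \<phi>h b + lbar / 2 * t * (1 - t) * (norm (a - b))\<^sup>2"
    if "a \<in> X" "b \<in> X" "0 \<le> t" "t \<le> 1" for a b t
    unfolding \<phi>h_def' by (rule sup_wc[OF Yne conjunct1[OF bddT[OF that(1)]] conjunct1[OF bddT[OF that(2)]] that(3,4) Twc[OF that(1,2) _ that(3,4)]])
  have close: "\<bar>\<phi>h u - \<phi> u\<bar> \<le> \<epsilon>" if "u \<in> X" for u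
    unfolding \<phi>_def' \<phi>h_def' by (rule sup_close[OF Yne conjunct1[OF bddT[OF that]] conjunct2[OF bddT[OF that]]]) (use tay[OF that] in \<open>simp add: abs_minus_commute\<close>)
  have \<phi>ge: "f u yh \<le> \<phi> u" if "u \<in> X" for u
    unfolding \<phi>_def' by (rule cSUP_upper[OF yh conjunct2[OF bddT[OF that]]])
  show ?thesis
  proof
    fix x assume x: "x \<in> X"
    have main: "\<exists>g gh. GDERIV (moreau \<phi>h X (2 * lbar)) x :> gh \<and> GDERIV (moreau \<phi> X (2 * lbar)) x :> g \<and>
       norm (gh - g) \<le> sqrt (8 * lbar * \<rho> * D ^ (k + 1) / fact (k + 1))"
    proof (cases "lbar = 0")
      case True
      have cst: "moreau \<psi> X (2 * lbar) = (\<lambda>_. INF u\<in>X. \<psi> u)" for \<psi> :: "'a \<Rightarrow> real"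
        using True by (simp add: moreau_def fun_eq_iff)
      have gd: "GDERIV (moreau \<psi> X (2 * lbar)) x :> 0" for \<psi> :: "'a \<Rightarrow> real"
        unfolding cst gderiv_def by simp
      show ?thesis using gd True by (intro exI[of _ 0]) simp
    next
      case False
      then have c: "lbar > 0" using lbar0 by simp
      let ?F = "\<lambda>u. \<phi> u + lbar * (norm (u - x))\<^sup>2"
      have lin: "linear (\<lambda>w. xydiff f X Y 0 x yh w [])"
        using xydiff_multilin(1)[OF X Y(1,2) ex0 gx_ex x yh, of "[]"] by simp
      obtain K where K: "\<And>w. norm (xydiff f X Y 0 x yh w []) \<le> K * norm w"
        using linear_bounded[OF lin] by blast
      have Flow: "f x yh - K\<^sup>2 / (2 * lbar) \<le> ?F u" if u: "u \<in> X" for u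
      proof -
        define r where "r = norm (u - x)"
        have nr: "norm (x - u) = r" by (simp add: r_def norm_minus_commute)
        have "f x yh + xydiff f X Y 0 x yh (u - x) [] - lam / 2 * r\<^sup>2 \<le> f u yh"
          using fsm[OF x u yh] unfolding nr by blast
        moreover have "- K * r \<le> xydiff f X Y 0 x yh (u - x) []" using K[of "u - x"] by (simp add: r_def abs_le_iff)
        moreover have "lam / 2 * r\<^sup>2 \<le> lbar / 2 * r\<^sup>2" using lbar_ge by (simp add: mult_right_mono)
        moreover have "0 \<le> lbar / 2 * (r - K / lbar)\<^sup>2" using c by simp
        moreover have "lbar / 2 * (r - K / lbar)\<^sup>2 = lbar / 2 * r\<^sup>2 - K * r + K\<^sup>2 / (2 * lbar)"
          using c by (simp add: power2_eq_square field_simps)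
        ultimately have "f x yh - K\<^sup>2 / (2 * lbar) \<le> f u yh + lbar * r\<^sup>2" by linarith
        then show ?thesis using \<phi>ge[OF u] by (simp add: r_def)
      qed
      have bdd1: "bdd_below (?F ` X)" using Flow unfolding bdd_below_def by blast
      have bdd2: "bdd_below ((\<lambda>u. \<phi>h u + lbar * (norm (u - x))\<^sup>2) ` X)"
      proof -
        have "f x yh - K\<^sup>2 / (2 * lbar) - \<epsilon> \<le> \<phi>h u + lbar * (norm (u - x))\<^sup>2" if "u \<in> X" for u
          using Flow[OF that] close[OF that] by (simp add: abs_le_iff)
        then show ?thesis unfolding bdd_below_def by blast
      qed
      obtain p s where E1: "\<forall>n. s n \<in> X" "(\<lambda>n. \<phi> (s n) + lbar * (norm (s n - x))\<^sup>2) \<longlonglongrightarrow> moreau \<phi> X (2 * lbar) x"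
          "s \<longlonglongrightarrow> p" "\<forall>u\<in>X. moreau \<phi> X (2 * lbar) x + lbar / 2 * (norm (u - p))\<^sup>2 \<le> \<phi> u + lbar * (norm (u - x))\<^sup>2"
          "GDERIV (moreau \<phi> X (2 * lbar)) x :> (2 * lbar) *\<^sub>R (x - p)"
        using envelope[OF X(1) x c \<phi>wc bdd1] by blast
      obtain ph sh where E2: "\<forall>n. sh n \<in> X" "(\<lambda>n. \<phi>h (sh n) + lbar * (norm (sh n - x))\<^sup>2) \<longlonglongrightarrow> moreau \<phi>h X (2 * lbar) x"
          "sh \<longlonglongrightarrow> ph" "\<forall>u\<in>X. moreau \<phi>h X (2 * lbar) x + lbar / 2 * (norm (u - ph))\<^sup>2 \<le> \<phi>h u + lbar * (norm (u - x))\<^sup>2"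
          "GDERIV (moreau \<phi>h X (2 * lbar)) x :> (2 * lbar) *\<^sub>R (x - ph)"
        using envelope[OF X(1) x c \<phi>hwc bdd2] by blast
      have pp: "lbar * (norm (p - ph))\<^sup>2 \<le> 2 * \<epsilon>"
        by (rule env_diff[OF c E1(1)[rule_format] E1(2,3,4) E2(1)[rule_format] E2(2,3,4)])
           (use close in \<open>simp add: abs_minus_commute\<close>)
      have "norm ((2 * lbar) *\<^sub>R (x - ph) - (2 * lbar) *\<^sub>R (x - p)) = 2 * lbar * norm (p - ph)"
        using c by (simp flip: scaleR_diff_right)
      also have "\<dots> \<le> sqrt (8 * lbar * \<epsilon>)"
      proof (rule real_le_rsqrt)
        have "(2 * lbar * norm (p - ph))\<^sup>2 = 4 * lbar * (lbar * (norm (p - ph))\<^sup>2)" by (simp add: power2_eq_square)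
        also have "\<dots> \<le> 4 * lbar * (2 * \<epsilon>)" using pp c by (intro mult_left_mono) auto
        finally show "(2 * lbar * norm (p - ph))\<^sup>2 \<le> 8 * lbar * \<epsilon>" by simp
      qed
      also have "8 * lbar * \<epsilon> = 8 * lbar * \<rho> * D ^ (k + 1) / fact (k + 1)" by (simp add: \<epsilon>_def)
      finally show ?thesis using E1(5) E2(5) by blast
    qed
    show "let lbar = lam + (if k \<ge> 1 then 2 * \<tau> * D ^ k / fact k else 0) in
     \<exists>g gh.
       GDERIV (moreau (primal (taylor_model f Y k yh) Y) X (2 * lbar)) x :> gh \<and>
       GDERIV (moreau (primal f Y) X (2 * lbar)) x :> g \<and>
       norm (gh - g) \<le> sqrt (8 * lbar * \<rho> * D ^ (k + 1) / fact (k + 1))"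
      unfolding Let_def using main unfolding lbar_def \<phi>_def \<phi>h_def Tm_def .
  qed
qed

end
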